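(* Let $A,B$ be finite groups equipped with probability measures $\mu$ on $A$ and $\nu$ on $B$. Let $(\mathcal{M},\tau)$ be a von Neumann algebra with a normal faithful tracial state and $U:A\to\mathcal{U}(\mathcal{M})$, $V:B\to\mathcal{U}(\mathcal{M})$ group homomorphisms. Then \[\mathbf{E}_{a\in A,b\in B}\|[U(a),V(b)]\|_2^2\leq\kappa(\mu)\kappa(\nu)\int\|[U(a),V(b)]\|_2^2\,d\mu(a)\,d\nu(b).\]
   Context: $\|x\|_2=\tau(x^*x)^{1/2}$, $[x,y]=xy-yx$, $\mathbf{E}$ is the average for the uniform probability measure. For a countable group $G$ and a probability measure $\mu$ on $G$, $\kappa(\mu)$ is the smallest number $\kappa\in[0,+\infty]$ such that for every unitary representation $(\pi,\mathcal{H})$ of $G$ and every $\xi\in\mathcal{H}$, $\|\xi-P_{\mathcal{H}^\pi}\xi\|^2\leq\frac{\kappa}{2}\int_G\|\pi(g)\xi-\xi\|^2d\mu(g)$, where $\mathcal{H}^\pi$ is the space of $\pi(G)$-invariant vectors and $P_{\mathcal{H}^\pi}$ the orthogonal projection onto it ($\kappa(\mu)=+\infty$ if no finite constant works, e.g. if the support of $\mu$ does not generate $G$; in that case the right-hand side of the claim is interpreted as $+\infty$). *)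

theory Defs
  imports "HOL-Analysis.Analysis" "HOL-Algebra.Group"
begin

text \<open>A complex inner product space: a real normed vector space with a complex
scalar multiplication extending the real one and a complex inner product
(antilinear in the first, linear in the second argument) inducing the norm.\<close>

class complex_inner = real_normed_vector +
  fixes scaleC :: "complex \<Rightarrow> 'a \<Rightarrow> 'a"
    and cinner :: "'a \<Rightarrow> 'a \<Rightarrow> complex"
  assumes scaleC_add_right: "scaleC c (x + y) = scaleC c x + scaleC c y"
    and scaleC_add_left: "scaleC (c + d) x = scaleC c x + scaleC d x"
    and scaleC_scaleC: "scaleC c (scaleC d x) = scaleC (c * d) x"
    and scaleC_one: "scaleC 1 x = x"
    and scaleR_scaleC: "scaleR r x = scaleC (complex_of_real r) x"
    and cinner_cnj_commute: "cinner x y = cnj (cinner y x)"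
    and cinner_add_right: "cinner x (y + z) = cinner x y + cinner x z"
    and cinner_scaleC_right: "cinner x (scaleC c y) = c * cinner x y"
    and cinner_ge_zero: "Im (cinner x x) = 0 \<and> Re (cinner x x) \<ge> 0"
    and cinner_eq_zero_iff: "cinner x x = 0 \<longleftrightarrow> x = 0"
    and norm_eq_sqrt_cinner: "norm x = sqrt (Re (cinner x x))"

class chilbert_space = complex_inner + complete_space

definition clinear_map :: "('a::complex_inner \<Rightarrow> 'b::complex_inner) \<Rightarrow> bool" where
  "clinear_map T \<longleftrightarrow> (\<forall>x y. T (x + y) = T x + T y) \<and> (\<forall>c x. T (scaleC c x) = scaleC c (T x))"

definition bounded_op :: "('a::complex_inner \<Rightarrow> 'a) \<Rightarrow> bool" where
  "bounded_op T \<longleftrightarrow> clinear_map T \<and> (\<exists>C. \<forall>x. norm (T x) \<le> C * norm x)"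

definition adj :: "('a::complex_inner \<Rightarrow> 'a) \<Rightarrow> ('a \<Rightarrow> 'a)" where
  "adj T = (SOME S. \<forall>x y. cinner (T x) y = cinner x (S y))"

definition commutant :: "('a::complex_inner \<Rightarrow> 'a) set \<Rightarrow> ('a \<Rightarrow> 'a) set" where
  "commutant S = {T. bounded_op T \<and> (\<forall>s\<in>S. T \<circ> s = s \<circ> T)}"

text \<open>von Neumann algebra: a self-adjoint set of bounded operators equal to its
bicommutant (by the bicommutant theorem this is the same as a unital
weak-operator-closed *-subalgebra of B(H)).\<close>
definition von_neumann_algebra :: "('a::chilbert_space \<Rightarrow> 'a) set \<Rightarrow> bool" where
  "von_neumann_algebra M \<longleftrightarrow>
     (\<forall>x\<in>M. bounded_op x) \<and> (\<forall>x\<in>M. adj x \<in> M) \<and> commutant (commutant M) = M"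

definition positive_op :: "('a::complex_inner \<Rightarrow> 'a) \<Rightarrow> bool" where
  "positive_op p \<longleftrightarrow> bounded_op p \<and> adj p = p \<and> (\<forall>v. Re (cinner v (p v)) \<ge> 0)"

definition op_le :: "('a::complex_inner \<Rightarrow> 'a) \<Rightarrow> ('a \<Rightarrow> 'a) \<Rightarrow> bool" where
  "op_le x y \<longleftrightarrow> positive_op (\<lambda>v. y v - x v)"

definition normal_functional :: "('a::chilbert_space \<Rightarrow> 'a) set \<Rightarrow> (('a \<Rightarrow> 'a) \<Rightarrow> complex) \<Rightarrow> bool" where
  "normal_functional M \<tau> \<longleftrightarrow>
     (\<forall>D s. D \<subseteq> M \<and> D \<noteq> {} \<and> (\<forall>d\<in>D. positive_op d)
        \<and> (\<forall>d1\<in>D. \<forall>d2\<in>D. \<exists>d3\<in>D. op_le d1 d3 \<and> op_le d2 d3)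
        \<and> (\<exists>C. \<forall>d\<in>D. \<forall>v. norm (d v) \<le> C * norm v)
        \<and> s \<in> M \<and> (\<forall>d\<in>D. op_le d s) \<and> (\<forall>t\<in>M. (\<forall>d\<in>D. op_le d t) \<longrightarrow> op_le s t)
        \<longrightarrow> Re (\<tau> s) = (SUP d\<in>D. Re (\<tau> d)))"

definition normal_faithful_tracial_state ::
    "('a::chilbert_space \<Rightarrow> 'a) set \<Rightarrow> (('a \<Rightarrow> 'a) \<Rightarrow> complex) \<Rightarrow> bool" where
  "normal_faithful_tracial_state M \<tau> \<longleftrightarrow>
     (\<forall>x\<in>M. \<forall>y\<in>M. \<tau> (\<lambda>v. x v + y v) = \<tau> x + \<tau> y)
   \<and> (\<forall>c. \<forall>x\<in>M. \<tau> (\<lambda>v. scaleC c (x v)) = c * \<tau> x)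
   \<and> (\<forall>x\<in>M. Im (\<tau> (adj x \<circ> x)) = 0 \<and> Re (\<tau> (adj x \<circ> x)) \<ge> 0)
   \<and> \<tau> id = 1
   \<and> (\<forall>x\<in>M. \<forall>y\<in>M. \<tau> (x \<circ> y) = \<tau> (y \<circ> x))
   \<and> (\<forall>x\<in>M. \<tau> (adj x \<circ> x) = 0 \<longrightarrow> x = (\<lambda>_. 0))
   \<and> normal_functional M \<tau>"

definition unitary_in :: "('a::complex_inner \<Rightarrow> 'a) set \<Rightarrow> ('a \<Rightarrow> 'a) \<Rightarrow> bool" where
  "unitary_in M u \<longleftrightarrow> u \<in> M \<and> adj u \<circ> u = id \<and> u \<circ> adj u = id"

definition unitary_hom :: "('g, 'z) monoid_scheme \<Rightarrow> ('a::complex_inner \<Rightarrow> 'a) set \<Rightarrow> ('g \<Rightarrow> 'a \<Rightarrow> 'a) \<Rightarrow> bool" where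
  "unitary_hom G M U \<longleftrightarrow> (\<forall>g\<in>carrier G. unitary_in M (U g))
     \<and> (\<forall>g\<in>carrier G. \<forall>h\<in>carrier G. U (g \<otimes>\<^bsub>G\<^esub> h) = U g \<circ> U h)"

definition tnorm2_sq :: "(('a::complex_inner \<Rightarrow> 'a) \<Rightarrow> complex) \<Rightarrow> ('a \<Rightarrow> 'a) \<Rightarrow> real" where
  "tnorm2_sq \<tau> x = Re (\<tau> (adj x \<circ> x))"

definition commutator :: "('a::complex_inner \<Rightarrow> 'a) \<Rightarrow> ('a \<Rightarrow> 'a) \<Rightarrow> ('a \<Rightarrow> 'a)" where
  "commutator x y = (\<lambda>v. x (y v) - y (x v))"

definition unitary_op :: "('h::complex_inner \<Rightarrow> 'h) \<Rightarrow> bool" where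
  "unitary_op T \<longleftrightarrow> clinear_map T \<and> surj T \<and> (\<forall>x. norm (T x) = norm x)"

definition unitary_rep :: "('g, 'z) monoid_scheme \<Rightarrow> ('g \<Rightarrow> 'h::complex_inner \<Rightarrow> 'h) \<Rightarrow> bool" where
  "unitary_rep G \<pi> \<longleftrightarrow> (\<forall>g\<in>carrier G. unitary_op (\<pi> g))
     \<and> (\<forall>g\<in>carrier G. \<forall>h\<in>carrier G. \<pi> (g \<otimes>\<^bsub>G\<^esub> h) = \<pi> g \<circ> \<pi> h)"

definition invariant_vectors :: "('g, 'z) monoid_scheme \<Rightarrow> ('g \<Rightarrow> 'h::complex_inner \<Rightarrow> 'h) \<Rightarrow> 'h set" where
  "invariant_vectors G \<pi> = {\<xi>. \<forall>g\<in>carrier G. \<pi> g \<xi> = \<xi>}"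

definition orth_proj :: "'h::complex_inner set \<Rightarrow> 'h \<Rightarrow> 'h" where
  "orth_proj S \<xi> = (THE p. p \<in> S \<and> (\<forall>s\<in>S. cinner s (\<xi> - p) = 0))"

text \<open>kappa(mu), computed over unitary representations on the Hilbert space 'h
(the value of Inf over the empty set is \<top> = +\<infinity>).  For a finite group this
agrees with the definition over all Hilbert spaces as soon as 'h is
infinite-dimensional.\<close>
definition kappa :: "'h::chilbert_space itself \<Rightarrow> ('g, 'z) monoid_scheme \<Rightarrow> ('g \<Rightarrow> real) \<Rightarrow> ennreal" where
  "kappa _ G \<mu> = Inf {ennreal k | k. k \<ge> 0 \<and>
     (\<forall>\<pi> :: 'g \<Rightarrow> 'h \<Rightarrow> 'h. unitary_rep G \<pi> \<longrightarrow> (\<forall>\<xi>.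
        (norm (\<xi> - orth_proj (invariant_vectors G \<pi>) \<xi>))\<^sup>2
          \<le> k / 2 * (\<Sum>g\<in>carrier G. \<mu> g * (norm (\<pi> g \<xi> - \<xi>))\<^sup>2)))}"

definition infinite_dimensional :: "'h::complex_inner itself \<Rightarrow> bool" where
  "infinite_dimensional _ \<longleftrightarrow> (\<forall>S :: 'h set. finite S \<longrightarrow> (\<exists>x. x \<noteq> 0 \<and> (\<forall>s\<in>S. cinner s x = 0)))"

definition prob_on :: "'g set \<Rightarrow> ('g \<Rightarrow> real) \<Rightarrow> bool" where
  "prob_on X \<mu> \<longleftrightarrow> (\<forall>x\<in>X. \<mu> x \<ge> 0) \<and> (\<Sum>x\<in>X. \<mu> x) = 1"

end

theory Submission
  imports Defs
begin


lemma scaleC_zero_left[simp]: "scaleC 0 (x::'a::complex_inner) = 0"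
proof -
  have "scaleC 0 x = scaleC 0 x + scaleC 0 x" by (metis add_0 scaleC_add_left)
  then show ?thesis by simp
qed

lemma scaleC_zero_right[simp]: "scaleC c (0::'a::complex_inner) = 0"
proof -
  have "scaleC c (0::'a) = scaleC c 0 + scaleC c 0" by (metis add_0 scaleC_add_right)
  then show ?thesis by simp
qed

lemma scaleC_minus_right: "scaleC c (- (x::'a::complex_inner)) = - scaleC c x"
  by (metis add_eq_0_iff neg_eq_iff_add_eq_0 scaleC_add_right scaleC_zero_right)

lemma scaleC_diff_right: "scaleC c ((x::'a::complex_inner) - y) = scaleC c x - scaleC c y"
  by (metis diff_conv_add_uminus scaleC_add_right scaleC_minus_right)

lemma scaleC_minus_left: "scaleC (- c) (x::'a::complex_inner) = - scaleC c x"
  by (metis add.right_inverse eq_neg_iff_add_eq_0 scaleC_add_left scaleC_zero_left)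

lemma scaleC_diff_left: "scaleC (c - d) (x::'a::complex_inner) = scaleC c x - scaleC d x"
  by (metis diff_conv_add_uminus scaleC_add_left scaleC_minus_left)

lemma scaleC_minus1: "scaleC (-1) (x::'a::complex_inner) = - x"
  by (simp add: scaleC_minus_left scaleC_one)

lemma scaleC_sum_right: "scaleC c (\<Sum>i\<in>S. f i) = (\<Sum>i\<in>S. scaleC c (f i :: 'a::complex_inner))"
  by (induction S rule: infinite_finite_induct) (auto simp: scaleC_add_right)

lemma scaleC_sum_left: "scaleC (\<Sum>i\<in>S. f i) (x::'a::complex_inner) = (\<Sum>i\<in>S. scaleC (f i) x)"
  by (induction S rule: infinite_finite_induct) (auto simp: scaleC_add_left)

lemma scaleC_real: "scaleC (complex_of_real r) (x::'a::complex_inner) = scaleR r x"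
  by (simp add: scaleR_scaleC)

lemma cinner_zero_right[simp]: "cinner (x::'a::complex_inner) 0 = 0"
  by (metis add_cancel_right_right cinner_add_right)

lemma cinner_zero_left[simp]: "cinner 0 (x::'a::complex_inner) = 0"
  by (metis cinner_cnj_commute cinner_zero_right complex_cnj_zero)

lemma cinner_add_left: "cinner ((x::'a::complex_inner) + y) z = cinner x z + cinner y z"
  by (metis cinner_add_right cinner_cnj_commute complex_cnj_add)

lemma cinner_scaleC_left: "cinner (scaleC c (x::'a::complex_inner)) y = cnj c * cinner x y"
  by (metis cinner_cnj_commute cinner_scaleC_right complex_cnj_cnj complex_cnj_mult)

lemma cinner_minus_right: "cinner (x::'a::complex_inner) (- y) = - cinner x y"
  by (metis add_eq_0_iff cinner_add_right cinner_zero_right)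

lemma cinner_minus_left: "cinner (- (x::'a::complex_inner)) y = - cinner x y"
  by (metis add_eq_0_iff cinner_add_left cinner_zero_left)

lemma cinner_diff_right: "cinner (x::'a::complex_inner) (y - z) = cinner x y - cinner x z"
  unfolding diff_conv_add_uminus by (simp only: cinner_add_right cinner_minus_right)

lemma cinner_diff_left: "cinner ((x::'a::complex_inner) - y) z = cinner x z - cinner y z"
  unfolding diff_conv_add_uminus by (simp only: cinner_add_left cinner_minus_left)

lemma cinner_sum_right: "cinner (x::'a::complex_inner) (\<Sum>i\<in>S. f i) = (\<Sum>i\<in>S. cinner x (f i))"
  by (induction S rule: infinite_finite_induct) (auto simp: cinner_add_right)

lemma cinner_sum_left: "cinner (\<Sum>i\<in>S. f i) (x::'a::complex_inner) = (\<Sum>i\<in>S. cinner (f i) x)"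
  by (induction S rule: infinite_finite_induct) (auto simp: cinner_add_left)

lemma cinner_self_real: "cinner (x::'a::complex_inner) x = complex_of_real ((norm x)\<^sup>2)"
proof -
  have "Im (cinner x x) = 0" "Re (cinner x x) \<ge> 0" using cinner_ge_zero by auto
  moreover have "(norm x)\<^sup>2 = Re (cinner x x)" using norm_eq_sqrt_cinner[of x] calculation by simp
  ultimately show ?thesis by (simp add: complex_eq_iff)
qed

lemma norm_sq_cinner: "(norm (x::'a::complex_inner))\<^sup>2 = Re (cinner x x)"
  by (simp add: cinner_self_real)

lemma cinner_ext: "(\<And>x. cinner x a = cinner x (b::'a::complex_inner)) \<Longrightarrow> a = b"
  by (metis cinner_diff_right cinner_eq_zero_iff diff_self eq_iff_diff_eq_0)

lemma norm_add_sq: "(norm ((x::'a::complex_inner) + y))\<^sup>2 = (norm x)\<^sup>2 + (norm y)\<^sup>2 + 2 * Re (cinner x y)"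
proof -
  have "Re (cinner y x) = Re (cinner x y)" by (subst cinner_cnj_commute) simp
  then show ?thesis by (simp add: norm_sq_cinner cinner_add_left cinner_add_right)
qed

lemma norm_diff_sq: "(norm ((x::'a::complex_inner) - y))\<^sup>2 = (norm x)\<^sup>2 + (norm y)\<^sup>2 - 2 * Re (cinner x y)"
proof -
  have "Re (cinner y x) = Re (cinner x y)" by (subst cinner_cnj_commute) simp
  then show ?thesis by (simp add: norm_sq_cinner cinner_diff_left cinner_diff_right)
qed

lemma cauchy_schwarz_c: "norm (cinner (x::'a::complex_inner) y) \<le> norm x * norm y"
proof (cases "y = 0")
  case True then show ?thesis by simp
next
  case False
  define n where "n = (norm y)\<^sup>2"
  have n: "n > 0" using False by (simp add: n_def)
  define c where "c = cinner y x"
  define t where "t = c / complex_of_real n"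
  have cyy: "cinner y y = complex_of_real n" by (simp add: n_def cinner_self_real)
  have cxy: "cinner x y = cnj c" by (simp add: c_def cinner_cnj_commute[of x y])
  have "0 \<le> (norm (x - scaleC t y))\<^sup>2" by simp
  also have "\<dots> = Re (cinner x x - t * cinner x y - cnj t * cinner y x + cnj t * t * cinner y y)"
    by (simp add: norm_sq_cinner cinner_diff_left cinner_diff_right cinner_scaleC_left cinner_scaleC_right algebra_simps)
  also have "\<dots> = (norm x)\<^sup>2 - (cmod c)\<^sup>2 / n"
  proof -
    have cc: "c * cnj c = complex_of_real ((cmod c)\<^sup>2)" using complex_norm_square[of c] by simp
    have "t * cinner x y = (c * cnj c) / complex_of_real n" by (simp add: t_def cxy)
    then have 1: "t * cinner x y = complex_of_real ((cmod c)\<^sup>2 / n)" by (simp add: cc)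
    have "cnj t * cinner y x = (c * cnj c) / complex_of_real n" by (simp add: t_def c_def[symmetric] mult.commute)
    then have 2: "cnj t * cinner y x = complex_of_real ((cmod c)\<^sup>2 / n)" by (simp add: cc)
    have "cnj t * t * cinner y y = (c * cnj c) / complex_of_real n"
      using n by (simp add: t_def cyy)
    then have 3: "cnj t * t * cinner y y = complex_of_real ((cmod c)\<^sup>2 / n)" by (simp add: cc)
    from 1 2 3 have "Re (cinner x x - t * cinner x y - cnj t * cinner y x + cnj t * t * cinner y y)
       = Re (cinner x x) - (cmod c)\<^sup>2 / n" by simp
    then show ?thesis by (simp add: norm_sq_cinner)
  qed
  finally have "(cmod c)\<^sup>2 \<le> (norm x)\<^sup>2 * n" using n by (simp add: field_simps)
  also have "\<dots> = (norm x * norm y)\<^sup>2" by (simp add: n_def power_mult_distrib)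
  finally have "cmod c \<le> norm x * norm y"
    by (meson norm_ge_zero mult_nonneg_nonneg power2_le_imp_le)
  moreover have "cmod (cinner x y) = cmod c" by (simp add: cxy)
  ultimately show ?thesis by simp
qed


lemma riesz:
  fixes f :: "'a::chilbert_space \<Rightarrow> complex"
  assumes add: "\<And>x y. f (x + y) = f x + f y" and sc: "\<And>c x. f (scaleC c x) = c * f x"
    and bd: "\<And>x. cmod (f x) \<le> K * norm x"
  shows "\<exists>z. \<forall>x. f x = cinner z x"
proof (cases "\<forall>x. f x = 0")
  case True then show ?thesis by (intro exI[of _ 0]) simp
next
  case False
  have f0: "f 0 = 0" by (metis add add_0 add_cancel_right_right)
  have fminus: "f (x - y) = f x - f y" for x y by (metis add diff_add_cancel eq_diff_eq)
  have fR: "f (scaleR r x) = complex_of_real r * f x" for r x by (simp add: scaleR_scaleC sc)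
  from False obtain x0 where x0: "f x0 \<noteq> 0" by blast
  define H where "H = {x. f x = 1}"
  have x1H: "scaleC (inverse (f x0)) x0 \<in> H" using x0 by (simp add: H_def sc)
  define d2 where "d2 = Inf ((\<lambda>x. (norm x)\<^sup>2) ` H)"
  have bdd: "bdd_below ((\<lambda>x. (norm x)\<^sup>2) ` H)" by (intro bdd_belowI[of _ 0]) auto
  have d2le: "d2 \<le> (norm h)\<^sup>2" if "h \<in> H" for h
    unfolding d2_def using bdd that by (intro cInf_lower) auto
  have "\<forall>n. \<exists>h\<in>H. (norm h)\<^sup>2 < d2 + inverse (real (Suc n))"
  proof
    fix n
    have "Inf ((\<lambda>x. (norm x)\<^sup>2) ` H) < d2 + inverse (real (Suc n))"
      by (simp add: d2_def)
    then obtain v where "v \<in> (\<lambda>x. (norm x)\<^sup>2) ` H" "v < d2 + inverse (real (Suc n))"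
      using cInf_lessD[of "(\<lambda>x. (norm x)\<^sup>2) ` H"] x1H by blast
    then show "\<exists>h\<in>H. (norm h)\<^sup>2 < d2 + inverse (real (Suc n))" by blast
  qed
  then obtain z where zH: "\<And>n. z n \<in> H" and zn: "\<And>n. (norm (z n))\<^sup>2 < d2 + inverse (real (Suc n))"
    by metis
  have par: "(norm (a - b))\<^sup>2 = 2 * (norm a)\<^sup>2 + 2 * (norm b)\<^sup>2 - (norm (a + b))\<^sup>2" for a b :: 'a
    using norm_add_sq[of a b] norm_diff_sq[of a b] by simp
  have dist_bd: "(norm (z m - z n))\<^sup>2 \<le> 2 * inverse (real (Suc m)) + 2 * inverse (real (Suc n))" for m n
  proof -
    have "scaleR (1/2) (z m + z n) \<in> H" using zH[of m] zH[of n]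
      by (simp add: H_def fR add)
    then have "d2 \<le> (norm (scaleR (1/2) (z m + z n)))\<^sup>2" by (rule d2le)
    also have "\<dots> = (norm (z m + z n))\<^sup>2 / 4" by (simp add: power2_eq_square)
    finally have "4 * d2 \<le> (norm (z m + z n))\<^sup>2" by simp
    then show ?thesis using par[of "z m" "z n"] zn[of m] zn[of n] by simp
  qed
  have "Cauchy z"
  proof (rule metric_CauchyI)
    fix e :: real assume e: "0 < e"
    obtain M :: nat where M: "4 / e\<^sup>2 < real M" using reals_Archimedean2 by blast
    have Mpos: "real M > 0" using M e by (smt (verit) divide_pos_pos zero_less_power)
    have "\<forall>m\<ge>M. \<forall>n\<ge>M. dist (z m) (z n) < e"
    proof (intro allI impI)
      fix m n assume mn: "m \<ge> M" "n \<ge> M"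
      have im: "inverse (real (Suc m)) < inverse (real M)"
        using mn Mpos by (simp add: less_imp_inverse_less)
      have iN: "inverse (real (Suc n)) < inverse (real M)"
        using mn Mpos by (simp add: less_imp_inverse_less)
      have "4 * inverse (real M) < e\<^sup>2" using M Mpos e
        by (simp add: field_simps)
      then have "(norm (z m - z n))\<^sup>2 < e\<^sup>2" using dist_bd[of m n] im iN by simp
      then show "dist (z m) (z n) < e" using e
        by (simp add: dist_norm power2_less_imp_less)
    qed
    then show "\<exists>M. \<forall>m\<ge>M. \<forall>n\<ge>M. dist (z m) (z n) < e" by blast
  qed
  then obtain L where L: "z \<longlonglongrightarrow> L" using Cauchy_convergent_iff convergent_def by blast
  have fL: "f L = 1"
  proof -
    have lim0: "(\<lambda>n. \<bar>K\<bar> * norm (z n - L)) \<longlonglongrightarrow> \<bar>K\<bar> * 0"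
      using L by (intro tendsto_intros) (simp add: LIM_zero tendsto_norm_zero)
    have "cmod (1 - f L) \<le> \<bar>K\<bar> * norm (z n - L)" for n
    proof -
      have "1 - f L = f (z n - L)" using zH[of n] by (simp add: H_def fminus)
      also have "cmod \<dots> \<le> K * norm (z n - L)" by (rule bd)
      also have "\<dots> \<le> \<bar>K\<bar> * norm (z n - L)" by (simp add: mult_right_mono)
      finally show ?thesis .
    qed
    then have "cmod (1 - f L) \<le> \<bar>K\<bar> * 0"
      by (intro tendsto_le[OF _ lim0 tendsto_const]) auto
    then show ?thesis by simp
  qed
  have nL: "(norm L)\<^sup>2 \<le> d2"
  proof -
    have a: "(\<lambda>n. (norm (z n))\<^sup>2) \<longlonglongrightarrow> (norm L)\<^sup>2" using L by (intro tendsto_intros)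
    have b: "(\<lambda>n. d2 + inverse (real (Suc n))) \<longlonglongrightarrow> d2 + 0"
      by (intro tendsto_intros LIMSEQ_inverse_real_of_nat)
    show ?thesis using LIMSEQ_le[OF a b] zn by (simp add: less_imp_le)
  qed
  have orth: "cinner L n0 = 0" if n0: "f n0 = 0" for n0
  proof -
    define c where "c = cinner L n0"
    define q where "q = (norm n0)\<^sup>2"
    define s where "s = 1 / (q + 1)"
    have q0: "q \<ge> 0" by (simp add: q_def)
    have s0: "s > 0" using q0 by (simp add: s_def)
    have sq: "s * q < 1" using q0 by (simp add: s_def field_simps)
    define t where "t = - complex_of_real s * cnj c"
    have LH: "L + scaleC t n0 \<in> H" using fL n0 by (simp add: H_def add sc)
    then have ge: "(norm L)\<^sup>2 \<le> (norm (L + scaleC t n0))\<^sup>2" using d2le[OF LH] nL by linarith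
    have cc: "c * cnj c = complex_of_real ((cmod c)\<^sup>2)" using complex_norm_square[of c] by simp
    have cq: "cinner n0 n0 = complex_of_real q" by (simp add: q_def cinner_self_real)
    have "cinner (L + scaleC t n0) (L + scaleC t n0) =
          cinner L L + t * c + cnj t * cnj c + cnj t * t * cinner n0 n0"
      by (simp add: cinner_add_left cinner_add_right cinner_scaleC_left cinner_scaleC_right c_def
          cinner_cnj_commute[of n0 L] algebra_simps)
    also have "\<dots> = cinner L L + (- 2 * complex_of_real s * (c * cnj c) + complex_of_real s * complex_of_real s * (c * cnj c) * complex_of_real q)"
      unfolding t_def cq by (simp add: algebra_simps)
    also have "\<dots> = cinner L L + complex_of_real (- 2 * s * (cmod c)\<^sup>2 + s * s * (cmod c)\<^sup>2 * q)"
      unfolding cc by simp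
    finally have "(norm (L + scaleC t n0))\<^sup>2 = (norm L)\<^sup>2 + (- 2 * s * (cmod c)\<^sup>2 + s * s * (cmod c)\<^sup>2 * q)"
      by (simp add: norm_sq_cinner)
    with ge have "0 \<le> s * ((cmod c)\<^sup>2 * (s * q - 2))" by (simp add: algebra_simps)
    then have "0 \<le> (cmod c)\<^sup>2 * (s * q - 2)" using s0 by (simp add: zero_le_mult_iff)
    moreover have "s * q - 2 < 0" using sq by simp
    moreover note mult_nonneg_nonpos[of "(cmod c)\<^sup>2" "s * q - 2"]
    ultimately have "(cmod c)\<^sup>2 * (s * q - 2) = 0" by simp
    with \<open>s * q - 2 < 0\<close> have "(cmod c)\<^sup>2 \<le> 0" by simp
    then show ?thesis by (simp add: c_def)
  qed
  have L0: "cinner L L \<noteq> 0" using fL f0 cinner_eq_zero_iff[of L] by auto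
  have key: "cinner L x = f x * cinner L L" for x
  proof -
    have "f (x - scaleC (f x) L) = 0" by (simp add: fminus sc fL)
    then have "cinner L (x - scaleC (f x) L) = 0" by (rule orth)
    then show ?thesis by (simp add: cinner_diff_right cinner_scaleC_right)
  qed
  show ?thesis
  proof (intro exI allI)
    fix x
    show "f x = cinner (scaleC (inverse (cnj (cinner L L))) L) x"
      using L0 by (simp add: cinner_scaleC_left key[of x])
  qed
qed

definition has_adj :: "('a::complex_inner \<Rightarrow> 'a) \<Rightarrow> ('a \<Rightarrow> 'a) \<Rightarrow> bool" where
  "has_adj T S \<longleftrightarrow> (\<forall>x y. cinner (T x) y = cinner x (S y))"

lemma adj_eqI: "has_adj T S \<Longrightarrow> adj T = S"
proof -
  assume h: "has_adj T S"
  have "\<forall>x y. cinner (T x) y = cinner x (adj T y)"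
    unfolding adj_def
    by (rule someI[where P = "\<lambda>S. \<forall>x y. cinner (T x) y = cinner x (S y)", OF h[unfolded has_adj_def]])
  then show "adj T = S" using h unfolding has_adj_def
    by (metis cinner_ext ext)
qed

lemma has_adj_sym: "has_adj T S \<Longrightarrow> has_adj S T"
  unfolding has_adj_def by (metis cinner_cnj_commute)

lemma has_adj_comp: "has_adj T1 S1 \<Longrightarrow> has_adj T2 S2 \<Longrightarrow> has_adj (T1 \<circ> T2) (S2 \<circ> S1)"
  unfolding has_adj_def by simp

lemma has_adj_add: "has_adj T1 S1 \<Longrightarrow> has_adj T2 S2 \<Longrightarrow> has_adj (\<lambda>v. T1 v + T2 v) (\<lambda>v. S1 v + S2 v)"
  unfolding has_adj_def by (simp add: cinner_add_left cinner_add_right)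

lemma has_adj_diff: "has_adj T1 S1 \<Longrightarrow> has_adj T2 S2 \<Longrightarrow> has_adj (\<lambda>v. T1 v - T2 v) (\<lambda>v. S1 v - S2 v)"
  unfolding has_adj_def by (simp add: cinner_diff_left cinner_diff_right)

lemma has_adj_scale: "has_adj T S \<Longrightarrow> has_adj (\<lambda>v. scaleC c (T v)) (\<lambda>v. scaleC (cnj c) (S v))"
  unfolding has_adj_def by (simp add: cinner_scaleC_left cinner_scaleC_right)

lemma has_adj_sum: "(\<And>i. i \<in> I \<Longrightarrow> has_adj (T i) (S i)) \<Longrightarrow>
    has_adj (\<lambda>v. \<Sum>i\<in>I. T i v) (\<lambda>v. \<Sum>i\<in>I. S i v)"
  unfolding has_adj_def by (simp add: cinner_sum_left cinner_sum_right)

lemma has_adj_id: "has_adj id id"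
  unfolding has_adj_def by simp

lemma adj_exists:
  fixes T :: "'a::chilbert_space \<Rightarrow> 'a"
  assumes "bounded_op T"
  shows "has_adj T (adj T)"
proof -
  from assms obtain C where lin: "clinear_map T" and C: "\<And>x. norm (T x) \<le> C * norm x"
    unfolding bounded_op_def by blast
  have "\<exists>z. \<forall>x. cinner y (T x) = cinner z x" for y
  proof (rule riesz)
    fix x x' show "cinner y (T (x + x')) = cinner y (T x) + cinner y (T x')"
      using lin by (simp add: clinear_map_def cinner_add_right)
  next
    fix c x show "cinner y (T (scaleC c x)) = c * cinner y (T x)"
      using lin by (simp add: clinear_map_def cinner_scaleC_right)
  next
    fix x
    have "cmod (cinner y (T x)) \<le> norm y * norm (T x)" by (rule cauchy_schwarz_c)
    also have "\<dots> \<le> norm y * (C * norm x)" by (simp add: C mult_left_mono)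
    finally show "cmod (cinner y (T x)) \<le> (norm y * C) * norm x" by (simp add: mult.assoc)
  qed
  then obtain S where S: "\<And>y x. cinner y (T x) = cinner (S y) x" by metis
  have "has_adj T S" unfolding has_adj_def
    by (metis S cinner_cnj_commute)
  then show ?thesis using adj_eqI by metis
qed


definition psd_on :: "'i set \<Rightarrow> ('i \<Rightarrow> 'i \<Rightarrow> complex) \<Rightarrow> bool" where
  "psd_on I G \<longleftrightarrow> (\<forall>i\<in>I. \<forall>j\<in>I. G i j = cnj (G j i)) \<and>
     (\<forall>c. 0 \<le> Re (\<Sum>i\<in>I. \<Sum>j\<in>I. cnj (c i) * c j * G i j))"

lemma psd_diag:
  assumes "psd_on I G" "finite I" "x \<in> I"
  shows "G x x = complex_of_real (Re (G x x))" "Re (G x x) \<ge> 0"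
proof -
  have "G x x = cnj (G x x)" using assms unfolding psd_on_def by blast
  then show "G x x = complex_of_real (Re (G x x))" by (metis Reals_cnj_iff complex_is_Real_iff of_real_Re)
  define c where "c = (\<lambda>i. if i = x then (1::complex) else 0)"
  have "0 \<le> Re (\<Sum>i\<in>I. \<Sum>j\<in>I. cnj (c i) * c j * G i j)" using assms unfolding psd_on_def by blast
  also have "(\<Sum>i\<in>I. \<Sum>j\<in>I. cnj (c i) * c j * G i j) = (\<Sum>i\<in>I. if i = x then (\<Sum>j\<in>I. if j = x then G x x else 0) else 0)"
    by (rule sum.cong[OF refl]) (auto simp: c_def intro!: sum.cong)
  also have "\<dots> = G x x" using assms by simp
  finally show "Re (G x x) \<ge> 0" .
qed

lemma psd_zero_row:
  assumes "psd_on I G" "finite I" "x \<in> I" "G x x = 0" "y \<in> I"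
  shows "G x y = 0"
proof (cases "y = x")
  case True then show ?thesis using assms by simp
next
  case False
  have herm: "G y x = cnj (G x y)" using assms unfolding psd_on_def by (metis complex_cnj_cnj)
  have gyy: "G y y = complex_of_real (Re (G y y))" using psd_diag(1)[OF assms(1,2,5)] .
  define g where "g = G x y"
  show ?thesis
  proof (rule ccontr)
    assume g0: "G x y \<noteq> 0"
    define R where "R = (Re (G y y) + 1) / (cmod g)\<^sup>2"
    have Rg: "R * (cmod g)\<^sup>2 = Re (G y y) + 1" using g0 by (simp add: R_def g_def)
    define c where "c = (\<lambda>i. if i = x then - complex_of_real R * g else if i = y then 1 else 0)"
    have "0 \<le> Re (\<Sum>i\<in>I. \<Sum>j\<in>I. cnj (c i) * c j * G i j)" using assms unfolding psd_on_def by blast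
    also have "(\<Sum>i\<in>I. \<Sum>j\<in>I. cnj (c i) * c j * G i j) =
        (\<Sum>i\<in>I. cnj (c i) * (c x * G i x + c y * G i y))"
    proof (rule sum.cong[OF refl])
      fix i assume "i \<in> I"
      have "(\<Sum>j\<in>I. cnj (c i) * c j * G i j) = (\<Sum>j\<in>I. (if j = x then cnj (c i) * c x * G i x else 0) + (if j = y then cnj (c i) * c y * G i y else 0))"
        using False by (intro sum.cong[OF refl]) (auto simp: c_def)
      also have "\<dots> = cnj (c i) * c x * G i x + cnj (c i) * c y * G i y"
        using assms by (simp add: sum.distrib)
      finally show "(\<Sum>j\<in>I. cnj (c i) * c j * G i j) = cnj (c i) * (c x * G i x + c y * G i y)"
        by (simp add: algebra_simps)
    qed
    also have "\<dots> = (\<Sum>i\<in>I. (if i = x then cnj (c x) * (c x * G x x + c y * G x y) else 0) + (if i = y then cnj (c y) * (c x * G y x + c y * G y y) else 0))"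
      using False by (intro sum.cong[OF refl]) (auto simp: c_def)
    also have "\<dots> = cnj (c x) * (c x * G x x + c y * G x y) + cnj (c y) * (c x * G y x + c y * G y y)"
      using assms by (simp add: sum.distrib)
    also have "\<dots> = - complex_of_real R * (cnj g * g) - complex_of_real R * (g * cnj g) + G y y"
      using False assms(4) by (simp add: c_def herm g_def algebra_simps)
    also have "\<dots> = complex_of_real (- 2 * (R * (cmod g)\<^sup>2)) + complex_of_real (Re (G y y))"
      using complex_norm_square[of g] gyy by (simp add: algebra_simps)
    finally show False using Rg psd_diag(2)[OF assms(1,2,5)] by simp
  qed
qed

lemma sum_insert2:
  assumes "finite F" "x \<notin> F"
  shows "(\<Sum>i\<in>insert x F. \<Sum>j\<in>insert x F. f i j) =
    f x x + (\<Sum>j\<in>F. f x j) + (\<Sum>i\<in>F. f i x) + (\<Sum>i\<in>F. \<Sum>j\<in>F. f i j)"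
  using assms by (simp add: sum.distrib ac_simps)

lemma gram_embed:
  assumes "finite I" "psd_on I G"
  shows "\<exists>w. \<forall>i\<in>I. \<forall>j\<in>I. (\<Sum>k\<in>I. cnj (w i k) * w j k) = G i j"
  using assms
proof (induction I arbitrary: G rule: finite_induct)
  case empty then show ?case by simp
next
  case (insert x F)
  note psd = insert.prems
  have fin: "finite (insert x F)" using insert by simp
  have herm: "\<And>i j. i \<in> insert x F \<Longrightarrow> j \<in> insert x F \<Longrightarrow> G i j = cnj (G j i)"
    using psd unfolding psd_on_def by blast
  define a where "a = G x x"
  have areal: "a = complex_of_real (Re a)" unfolding a_def using psd_diag(1)[OF psd fin insertI1] .
  have apos: "Re a \<ge> 0" unfolding a_def using psd_diag(2)[OF psd fin insertI1] .
  have cnja: "cnj a = a" using areal by (metis complex_cnj_complex_of_real)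
  define r where "r = sqrt (Re a)"
  have r2: "complex_of_real r * complex_of_real r = a"
  proof -
    have rr: "r * r = Re a" using apos by (simp add: r_def)
    have "complex_of_real r * complex_of_real r = complex_of_real (r * r)" by simp
    also have "\<dots> = a" using rr areal by simp
    finally show ?thesis .
  qed
  define G' where "G' = (\<lambda>i j. G i j - cnj (G x i) * G x j / a)"
  have "psd_on F G'"
    unfolding psd_on_def
  proof (intro conjI ballI allI)
    fix i j assume ij: "i \<in> F" "j \<in> F"
    have "G i j = cnj (G j i)" using ij herm by blast
    then show "G' i j = cnj (G' j i)" using cnja by (simp add: G'_def mult.commute)
  next
    fix c :: "_ \<Rightarrow> complex"
    define s where "s = (\<Sum>j\<in>F. G x j * c j)"
    define c' where "c' = c(x := - s / a)"
    have c'F: "\<And>i. i \<in> F \<Longrightarrow> c' i = c i" using insert.hyps by (auto simp: c'_def)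
    define Q where "Q = (\<Sum>i\<in>F. \<Sum>j\<in>F. cnj (c i) * c j * G i j)"
    have "(\<Sum>i\<in>insert x F. \<Sum>j\<in>insert x F. cnj (c' i) * c' j * G i j) =
       cnj (c' x) * c' x * a + cnj (c' x) * s + c' x * cnj s + Q"
    proof -
      have 1: "(\<Sum>j\<in>F. cnj (c' x) * c' j * G x j) = cnj (c' x) * s"
        by (simp add: s_def sum_distrib_left c'F algebra_simps)
      have "(\<Sum>i\<in>F. cnj (c' i) * c' x * G i x) = (\<Sum>i\<in>F. c' x * (cnj (G x i) * cnj (c i)))"
      proof (rule sum.cong[OF refl])
        fix i assume i: "i \<in> F"
        then have "G i x = cnj (G x i)" using herm by blast
        then show "cnj (c' i) * c' x * G i x = c' x * (cnj (G x i) * cnj (c i))" using c'F[OF i] by simp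
      qed
      also have "\<dots> = c' x * cnj s" by (simp add: s_def sum_distrib_left)
      finally have 2: "(\<Sum>i\<in>F. cnj (c' i) * c' x * G i x) = c' x * cnj s" .
      have 3: "(\<Sum>i\<in>F. \<Sum>j\<in>F. cnj (c' i) * c' j * G i j) = Q"
        by (simp add: Q_def c'F)
      show ?thesis using sum_insert2[OF insert.hyps, of "\<lambda>i j. cnj (c' i) * c' j * G i j"] 1 2 3
        by (simp add: a_def)
    qed
    also have "\<dots> = (\<Sum>i\<in>F. \<Sum>j\<in>F. cnj (c i) * c j * G' i j)"
    proof -
      have "(\<Sum>i\<in>F. \<Sum>j\<in>F. cnj (c i) * c j * G' i j) = Q - (\<Sum>i\<in>F. \<Sum>j\<in>F. cnj (c i * G x i) * (G x j * c j)) / a"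
        by (simp add: G'_def Q_def algebra_simps sum_subtractf sum_divide_distrib)
      also have "(\<Sum>i\<in>F. \<Sum>j\<in>F. cnj (c i * G x i) * (G x j * c j)) = (\<Sum>i\<in>F. cnj (c i * G x i)) * (\<Sum>j\<in>F. G x j * c j)"
        by (simp only: sum_product)
      also have "\<dots> = cnj s * s" by (simp add: s_def cnj_sum mult.commute)
      finally have eq: "(\<Sum>i\<in>F. \<Sum>j\<in>F. cnj (c i) * c j * G' i j) = Q - cnj s * s / a" .
      show ?thesis
      proof (cases "a = 0")
        case True then show ?thesis using eq by (simp add: c'_def)
      next
        case False
        have "cnj (c' x) = - cnj s / a" using cnja by (simp add: c'_def)
        then show ?thesis using eq False by (simp add: c'_def field_simps)
      qed
    qed
    finally have E: "(\<Sum>i\<in>insert x F. \<Sum>j\<in>insert x F. cnj (c' i) * c' j * G i j) = (\<Sum>i\<in>F. \<Sum>j\<in>F. cnj (c i) * c j * G' i j)" .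
    have "0 \<le> Re (\<Sum>i\<in>insert x F. \<Sum>j\<in>insert x F. cnj (c' i) * c' j * G i j)"
      using psd[unfolded psd_on_def, THEN conjunct2, rule_format, of c'] .
    then show "0 \<le> Re (\<Sum>i\<in>F. \<Sum>j\<in>F. cnj (c i) * c j * G' i j)" by (simp only: E)
  qed
  then obtain w' where w': "\<And>i j. i \<in> F \<Longrightarrow> j \<in> F \<Longrightarrow> (\<Sum>k\<in>F. cnj (w' i k) * w' j k) = G' i j"
    using insert.IH by blast
  define w where "w = (\<lambda>i k. if k = x then (if i = x then complex_of_real r else G x i / complex_of_real r)
      else (if i = x then 0 else w' i k))"
  have sumF: "(\<Sum>k\<in>F. cnj (w i k) * w j k) = (if i = x \<or> j = x then 0 else G' i j)"
    if "i \<in> insert x F" "j \<in> insert x F" for i j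
  proof -
    have "(\<Sum>k\<in>F. cnj (w i k) * w j k) = (\<Sum>k\<in>F. if i = x \<or> j = x then 0 else cnj (w' i k) * w' j k)"
      using insert.hyps by (intro sum.cong) (auto simp: w_def)
    then show ?thesis using that w' insert.hyps by auto
  qed
  have a0: "G x j = 0" if "a = 0" "j \<in> insert x F" for j
    using psd_zero_row[OF psd fin _ _ that(2)] that(1) by (simp add: a_def)
  show ?case
  proof (intro exI ballI)
    fix i j assume ij: "i \<in> insert x F" "j \<in> insert x F"
    have "(\<Sum>k\<in>insert x F. cnj (w i k) * w j k) = cnj (w i x) * w j x + (\<Sum>k\<in>F. cnj (w i k) * w j k)"
      using insert.hyps by simp
    also have "\<dots> = G i j"
    proof (cases "a = 0")
      case True
      have r0: "r = 0" using True by (simp add: r_def)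
      show ?thesis
        using ij sumF[OF ij] a0[OF True] True r0 herm[OF ij] by (auto simp: w_def G'_def a_def)
    next
      case False
      have rne: "complex_of_real r \<noteq> 0" using False r2 by auto
      have cr: "cnj (complex_of_real r) = complex_of_real r" by simp
      show ?thesis
      proof (cases "i = x")
        case True
        then show ?thesis using ij sumF[OF ij] rne r2 by (auto simp: w_def a_def)
      next
        case ix: False
        show ?thesis
        proof (cases "j = x")
          case True
          then show ?thesis using ij ix sumF[OF ij] rne herm[OF ij] by (auto simp: w_def)
        next
          case False
          have "cnj (G x i / complex_of_real r) * (G x j / complex_of_real r) = cnj (G x i) * G x j / a"
            using r2 by (simp add: field_simps)
          then show ?thesis using ij ix False sumF[OF ij] by (simp add: w_def G'_def)
        qed
      qed
    qed
    finally show "(\<Sum>k\<in>insert x F. cnj (w i k) * w j k) = G i j" .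
  qed
qed


definition orthonormal_on :: "'j set \<Rightarrow> ('j \<Rightarrow> 'h::complex_inner) \<Rightarrow> bool" where
  "orthonormal_on J u \<longleftrightarrow> (\<forall>i\<in>J. \<forall>j\<in>J. cinner (u i) (u j) = (if i = j then 1 else 0))"

definition psum :: "'j set \<Rightarrow> ('j \<Rightarrow> 'h::complex_inner) \<Rightarrow> 'h \<Rightarrow> 'h" where
  "psum J u \<xi> = (\<Sum>j\<in>J. scaleC (cinner (u j) \<xi>) (u j))"

lemma orthonormal_exists:
  assumes "finite J" "infinite_dimensional TYPE('h::complex_inner)"
  shows "\<exists>u :: 'j \<Rightarrow> 'h. orthonormal_on J u"
  using assms(1)
proof (induction J rule: finite_induct)
  case empty then show ?case by (simp add: orthonormal_on_def)
next
  case (insert x F)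
  then obtain u :: "'j \<Rightarrow> 'h" where u: "orthonormal_on F u" by blast
  obtain v :: 'h where v: "v \<noteq> 0" "\<forall>s\<in>u ` F. cinner s v = 0"
    using assms(2) insert.hyps(1) unfolding infinite_dimensional_def by blast
  define e where "e = scaleR (1 / norm v) v"
  have ee: "cinner e e = 1"
    using v(1) by (simp add: e_def cinner_self_real)
  have eu: "cinner (u i) e = 0" if "i \<in> F" for i
    using v(2) that by (simp add: e_def scaleR_scaleC cinner_scaleC_right)
  have ue: "cinner e (u i) = 0" if "i \<in> F" for i
    using eu[OF that] by (metis cinner_cnj_commute complex_cnj_zero)
  show ?case
  proof (intro exI)
    show "orthonormal_on (insert x F) (u(x := e))"
      using u ee eu ue insert.hyps(2) unfolding orthonormal_on_def by auto
  qed
qed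

lemma on_cinner_sum:
  assumes "orthonormal_on J u" "finite J" "i \<in> J"
  shows "cinner (u i) (\<Sum>j\<in>J. scaleC (d j) (u j)) = d i"
proof -
  have "cinner (u i) (\<Sum>j\<in>J. scaleC (d j) (u j)) = (\<Sum>j\<in>J. d j * (if i = j then 1 else 0))"
    using assms(1,3) unfolding orthonormal_on_def
    by (simp add: cinner_sum_right cinner_scaleC_right)
  also have "\<dots> = d i" using assms(2,3) by (simp add: if_distrib cong: if_cong)
  finally show ?thesis .
qed

lemma on_cinner_sum_left:
  assumes "orthonormal_on J u" "finite J" 
  shows "cinner (\<Sum>j\<in>J. scaleC (d j) (u j)) x = (\<Sum>j\<in>J. cnj (d j) * cinner (u j) x)"
  by (simp add: cinner_sum_left cinner_scaleC_left)

lemma on_norm_sum: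
  assumes "orthonormal_on J u" "finite J"
  shows "(norm (\<Sum>j\<in>J. scaleC (d j) (u j)))\<^sup>2 = (\<Sum>j\<in>J. (cmod (d j))\<^sup>2)"
proof -
  have "cinner (\<Sum>j\<in>J. scaleC (d j) (u j)) (\<Sum>j\<in>J. scaleC (d j) (u j)) = (\<Sum>j\<in>J. cnj (d j) * d j)"
    using assms by (simp add: on_cinner_sum_left on_cinner_sum)
  also have "\<dots> = complex_of_real (\<Sum>j\<in>J. (cmod (d j))\<^sup>2)"
    by (simp add: complex_norm_square mult.commute del: of_real_power)
  finally show ?thesis by (simp add: norm_sq_cinner)
qed

lemma on_psum_coef:
  assumes "orthonormal_on J u" "finite J" "i \<in> J"
  shows "cinner (u i) (psum J u \<xi>) = cinner (u i) \<xi>"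
  unfolding psum_def using on_cinner_sum[OF assms] .

lemma on_perp:
  assumes "orthonormal_on J u" "finite J" "i \<in> J"
  shows "cinner (u i) (\<xi> - psum J u \<xi>) = 0"
  using on_psum_coef[OF assms] by (simp add: cinner_diff_right)

lemma on_pythag:
  assumes "orthonormal_on J u" "finite J"
  shows "(norm \<xi>)\<^sup>2 = (norm (\<xi> - psum J u \<xi>))\<^sup>2 + (\<Sum>j\<in>J. (cmod (cinner (u j) \<xi>))\<^sup>2)"
proof -
  define p where "p = psum J u \<xi>"
  have "cinner p (\<xi> - p) = (\<Sum>j\<in>J. cnj (cinner (u j) \<xi>) * cinner (u j) (\<xi> - p))"
    unfolding p_def psum_def by (simp add: cinner_sum_left cinner_scaleC_left)
  also have "\<dots> = 0" using on_perp[OF assms] by (simp add: p_def)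
  finally have o: "cinner p (\<xi> - p) = 0" .
  have "(norm \<xi>)\<^sup>2 = (norm (p + (\<xi> - p)))\<^sup>2" by simp
  also have "\<dots> = (norm p)\<^sup>2 + (norm (\<xi> - p))\<^sup>2" by (simp only: norm_add_sq o) simp
  also have "(norm p)\<^sup>2 = (\<Sum>j\<in>J. (cmod (cinner (u j) \<xi>))\<^sup>2)"
    unfolding p_def psum_def using on_norm_sum[OF assms] .
  finally show ?thesis by (simp add: p_def)
qed

lemma on_decomp_eq:
  assumes "\<xi> - psum J u \<xi> = \<eta> - psum J u \<eta>" "\<And>j. j \<in> J \<Longrightarrow> cinner (u j) \<xi> = cinner (u j) \<eta>"
  shows "\<xi> = \<eta>"
proof -
  have "psum J u \<xi> = psum J u \<eta>" unfolding psum_def using assms(2) by (intro sum.cong) auto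
  then show ?thesis using assms(1) by (metis diff_add_cancel)
qed


definition rep_op :: "('a, 'c) monoid_scheme \<Rightarrow> 'k set \<Rightarrow> ('a \<times> 'k \<Rightarrow> 'h::complex_inner) \<Rightarrow> 'a \<Rightarrow> 'h \<Rightarrow> 'h" where
  "rep_op G K u a \<xi> = \<xi> - psum (carrier G \<times> K) u \<xi> +
     (\<Sum>j\<in>carrier G \<times> K. scaleC (cinner (u j) \<xi>) (u (a \<otimes>\<^bsub>G\<^esub> fst j, snd j)))"

definition vec :: "('a, 'c) monoid_scheme \<Rightarrow> 'k set \<Rightarrow> ('a \<times> 'k \<Rightarrow> 'h::complex_inner) \<Rightarrow> ('a \<Rightarrow> 'k \<Rightarrow> complex) \<Rightarrow> 'h" where
  "vec G K u w = (\<Sum>j\<in>carrier G \<times> K. scaleC (w (fst j) (snd j)) (u j))"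

lemma clinear_coef_sum: "clinear_map (\<lambda>\<xi>. \<Sum>j\<in>J. scaleC (cinner (u j) \<xi>) (v j :: 'h::complex_inner))"
  unfolding clinear_map_def
  by (simp add: cinner_add_right cinner_scaleC_right scaleC_add_left sum.distrib scaleC_sum_right scaleC_scaleC)

lemma clinear_combo:
  assumes "clinear_map f" "clinear_map g"
  shows "clinear_map (\<lambda>\<xi>::'h::complex_inner. \<xi> - f \<xi> + g \<xi>)"
  using assms unfolding clinear_map_def
  by (simp add: scaleC_add_right scaleC_diff_right algebra_simps)

lemma clinear_diff: "clinear_map f \<Longrightarrow> f (x - y) = f x - f (y::'a::complex_inner)"
  unfolding clinear_map_def by (metis add_diff_cancel_right' diff_add_cancel)

lemma sum_fst_snd: "(\<Sum>j\<in>A \<times> B. f (fst j) (snd j)) = (\<Sum>x\<in>A. \<Sum>y\<in>B. f x y)"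
  by (simp add: sum.cartesian_product case_prod_beta')

locale rep_ctx = group G for G (structure) +
  fixes K :: "'k set" and u :: "'a \<times> 'k \<Rightarrow> 'h::complex_inner"
  assumes finG: "finite (carrier G)" and finK: "finite K"
    and on: "orthonormal_on (carrier G \<times> K) u"
begin

lemma finJ: "finite (carrier G \<times> K)" using finG finK by simp

lemma rep_coef:
  assumes "a \<in> carrier G" "g \<in> carrier G" "k \<in> K"
  shows "cinner (u (g, k)) (rep_op G K u a \<xi>) = cinner (u (inv a \<otimes> g, k)) \<xi>"
proof -
  have gk: "(g, k) \<in> carrier G \<times> K" using assms by simp
  have "(\<Sum>j\<in>carrier G \<times> K. cinner (u (g, k)) (scaleC (cinner (u j) \<xi>) (u (a \<otimes> fst j, snd j))))
      = (\<Sum>j\<in>carrier G \<times> K. if j = (inv a \<otimes> g, k) then cinner (u j) \<xi> else 0)"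
  proof (rule sum.cong[OF refl])
    fix j assume j: "j \<in> carrier G \<times> K"
    obtain g' k' where j': "j = (g', k')" by force
    have g': "g' \<in> carrier G" "k' \<in> K" using j j' by auto
    have ag': "(a \<otimes> g', k') \<in> carrier G \<times> K" using g' assms by simp
    have "cinner (u (g, k)) (u (a \<otimes> g', k')) = (if (g, k) = (a \<otimes> g', k') then 1 else 0)"
      using on gk ag' unfolding orthonormal_on_def by blast
    moreover have "((g, k) = (a \<otimes> g', k')) \<longleftrightarrow> (j = (inv a \<otimes> g, k))"
      using j' g' assms by (auto simp: inv_solve_left)
    ultimately show "cinner (u (g, k)) (scaleC (cinner (u j) \<xi>) (u (a \<otimes> fst j, snd j))) =
        (if j = (inv a \<otimes> g, k) then cinner (u j) \<xi> else 0)"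
      using j' by (simp add: cinner_scaleC_right)
  qed
  also have "\<dots> = cinner (u (inv a \<otimes> g, k)) \<xi>" using finJ assms by simp
  finally have 3: "(\<Sum>j\<in>carrier G \<times> K. cinner (u (g, k)) (scaleC (cinner (u j) \<xi>) (u (a \<otimes> fst j, snd j))))
      = cinner (u (inv a \<otimes> g, k)) \<xi>" .
  show ?thesis
    unfolding rep_op_def
    by (simp add: cinner_add_right cinner_diff_right on_psum_coef[OF on finJ gk] cinner_sum_right 3)
qed

lemma reindex:
  assumes "a \<in> carrier G"
  shows "(\<Sum>j\<in>carrier G \<times> K. f (inv a \<otimes> fst j, snd j) (fst j, snd j)) = (\<Sum>j\<in>carrier G \<times> K. f j (a \<otimes> fst j, snd j))"
  by (rule sum.reindex_bij_witness[where i = "\<lambda>j. (a \<otimes> fst j, snd j)" and j = "\<lambda>j. (inv a \<otimes> fst j, snd j)"])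
     (use assms in \<open>auto simp: m_assoc[symmetric]\<close>)

lemma rep_rpart:
  assumes "a \<in> carrier G"
  shows "rep_op G K u a \<xi> - psum (carrier G \<times> K) u (rep_op G K u a \<xi>) = \<xi> - psum (carrier G \<times> K) u \<xi>"
proof -
  have "psum (carrier G \<times> K) u (rep_op G K u a \<xi>) = (\<Sum>j\<in>carrier G \<times> K. scaleC (cinner (u (inv a \<otimes> fst j, snd j)) \<xi>) (u (fst j, snd j)))"
    unfolding psum_def by (intro sum.cong) (auto simp: rep_coef assms)
  also have "\<dots> = (\<Sum>j\<in>carrier G \<times> K. scaleC (cinner (u j) \<xi>) (u (a \<otimes> fst j, snd j)))"
    using reindex[OF assms, of "\<lambda>j j'. scaleC (cinner (u j) \<xi>) (u j')"] by simp
  finally show ?thesis unfolding rep_op_def by simp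
qed

lemma rep_linear: "clinear_map (rep_op G K u a)"
proof -
  have "rep_op G K u a = (\<lambda>\<xi>. \<xi> - psum (carrier G \<times> K) u \<xi> + (\<Sum>j\<in>carrier G \<times> K. scaleC (cinner (u j) \<xi>) (u (a \<otimes> fst j, snd j))))"
    by (simp add: rep_op_def fun_eq_iff)
  then show ?thesis unfolding psum_def
    by (simp add: clinear_combo clinear_coef_sum)
qed

lemma rep_norm:
  assumes "a \<in> carrier G"
  shows "norm (rep_op G K u a \<xi>) = norm \<xi>"
proof -
  have "(norm (rep_op G K u a \<xi>))\<^sup>2 = (norm (\<xi> - psum (carrier G \<times> K) u \<xi>))\<^sup>2
     + (\<Sum>j\<in>carrier G \<times> K. (cmod (cinner (u j) (rep_op G K u a \<xi>)))\<^sup>2)"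
    using on_pythag[OF on finJ, of "rep_op G K u a \<xi>"] rep_rpart[OF assms] by simp
  also have "(\<Sum>j\<in>carrier G \<times> K. (cmod (cinner (u j) (rep_op G K u a \<xi>)))\<^sup>2) =
      (\<Sum>j\<in>carrier G \<times> K. (cmod (cinner (u (inv a \<otimes> fst j, snd j)) \<xi>))\<^sup>2)"
    by (intro sum.cong) (auto simp: rep_coef assms)
  also have "\<dots> = (\<Sum>j\<in>carrier G \<times> K. (cmod (cinner (u j) \<xi>))\<^sup>2)"
    using reindex[OF assms, of "\<lambda>j j'. (cmod (cinner (u j) \<xi>))\<^sup>2"] by simp
  also have "(norm (\<xi> - psum (carrier G \<times> K) u \<xi>))\<^sup>2 + \<dots> = (norm \<xi>)\<^sup>2"
    using on_pythag[OF on finJ, of \<xi>] by simp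
  finally show ?thesis by (simp add: power2_eq_iff_nonneg)
qed

lemma rep_hom:
  assumes "a \<in> carrier G" "b \<in> carrier G"
  shows "rep_op G K u (a \<otimes> b) = rep_op G K u a \<circ> rep_op G K u b"
proof
  fix \<xi>
  show "rep_op G K u (a \<otimes> b) \<xi> = (rep_op G K u a \<circ> rep_op G K u b) \<xi>"
  proof (rule on_decomp_eq)
    show "rep_op G K u (a \<otimes> b) \<xi> - psum (carrier G \<times> K) u (rep_op G K u (a \<otimes> b) \<xi>) =
      (rep_op G K u a \<circ> rep_op G K u b) \<xi> - psum (carrier G \<times> K) u ((rep_op G K u a \<circ> rep_op G K u b) \<xi>)"
      using assms by (simp add: rep_rpart)
  next
    fix j assume j: "j \<in> carrier G \<times> K"
    then obtain g k where gk: "j = (g, k)" "g \<in> carrier G" "k \<in> K" by auto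
    show "cinner (u j) (rep_op G K u (a \<otimes> b) \<xi>) = cinner (u j) ((rep_op G K u a \<circ> rep_op G K u b) \<xi>)"
      using assms gk by (simp add: rep_coef inv_mult_group m_assoc)
  qed
qed

lemma rep_one: "rep_op G K u \<one> \<xi> = \<xi>"
proof (rule on_decomp_eq)
  show "rep_op G K u \<one> \<xi> - psum (carrier G \<times> K) u (rep_op G K u \<one> \<xi>) = \<xi> - psum (carrier G \<times> K) u \<xi>"
    by (simp add: rep_rpart)
next
  fix j assume j: "j \<in> carrier G \<times> K"
  then obtain g k where gk: "j = (g, k)" "g \<in> carrier G" "k \<in> K" by auto
  show "cinner (u j) (rep_op G K u \<one> \<xi>) = cinner (u j) \<xi>"
    using gk by (simp add: rep_coef)
qed

lemma rep_unitary: "unitary_rep G (rep_op G K u)"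
  unfolding unitary_rep_def
proof (intro conjI ballI)
  fix a assume a: "a \<in> carrier G"
  have "surj (rep_op G K u a)"
  proof (rule surjI)
    fix \<xi>
    show "rep_op G K u a (rep_op G K u (inv a) \<xi>) = \<xi>"
      using rep_hom[of a "inv a"] a rep_one by (simp add: fun_eq_iff)
  qed
  then show "unitary_op (rep_op G K u a)"
    unfolding unitary_op_def using rep_linear rep_norm[OF a] by blast
next
  fix a b assume "a \<in> carrier G" "b \<in> carrier G"
  then show "rep_op G K u (a \<otimes> b) = rep_op G K u a \<circ> rep_op G K u b" by (rule rep_hom)
qed

lemma inv_vec_coef:
  assumes "\<zeta> \<in> invariant_vectors G (rep_op G K u)" "g \<in> carrier G" "k \<in> K"
  shows "cinner (u (g, k)) \<zeta> = cinner (u (\<one>, k)) \<zeta>"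
proof -
  have "rep_op G K u (inv g) \<zeta> = \<zeta>" using assms unfolding invariant_vectors_def by simp
  then have "cinner (u (\<one>, k)) \<zeta> = cinner (u (\<one>, k)) (rep_op G K u (inv g) \<zeta>)" by simp
  also have "\<dots> = cinner (u (g, k)) \<zeta>" using assms by (simp add: rep_coef)
  finally show ?thesis by simp
qed

lemma vec_coef:
  assumes "g \<in> carrier G" "k \<in> K"
  shows "cinner (u (g, k)) (vec G K u w) = w g k"
  unfolding vec_def using on_cinner_sum[OF on finJ, of "(g, k)" "\<lambda>j. w (fst j) (snd j)"] assms by simp

lemma vec_rpart: "vec G K u w - psum (carrier G \<times> K) u (vec G K u w) = 0"
proof -
  have "psum (carrier G \<times> K) u (vec G K u w) = vec G K u w"
    unfolding psum_def by (subst (2) vec_def) (intro sum.cong, auto simp: vec_coef)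
  then show ?thesis by simp
qed

lemma rep_vec:
  assumes "a \<in> carrier G"
  shows "rep_op G K u a (vec G K u w) = vec G K u (\<lambda>g k. w (inv a \<otimes> g) k)"
proof (rule on_decomp_eq)
  show "rep_op G K u a (vec G K u w) - psum (carrier G \<times> K) u (rep_op G K u a (vec G K u w)) =
    vec G K u (\<lambda>g. w (inv a \<otimes> g)) - psum (carrier G \<times> K) u (vec G K u (\<lambda>g. w (inv a \<otimes> g)))"
    using assms by (simp add: rep_rpart vec_rpart)
next
  fix j assume j: "j \<in> carrier G \<times> K"
  then obtain g k where gk: "j = (g, k)" "g \<in> carrier G" "k \<in> K" by auto
  show "cinner (u j) (rep_op G K u a (vec G K u w)) = cinner (u j) (vec G K u (\<lambda>g. w (inv a \<otimes> g)))"
    using gk assms by (simp add: rep_coef vec_coef)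
qed

lemma vec_diff: "vec G K u w - vec G K u w' = vec G K u (\<lambda>g k. w g k - w' g k)"
  unfolding vec_def by (simp add: scaleC_diff_left sum_subtractf)

lemma vec_norm: "(norm (vec G K u w))\<^sup>2 = (\<Sum>j\<in>carrier G \<times> K. (cmod (w (fst j) (snd j)))\<^sup>2)"
  unfolding vec_def by (rule on_norm_sum[OF on finJ])

lemma vec_proj:
  fixes w :: "'a \<Rightarrow> 'k \<Rightarrow> complex"
  defines "m \<equiv> (\<lambda>k. (\<Sum>g\<in>carrier G. w g k) / of_nat (card (carrier G)))"
  shows "orth_proj (invariant_vectors G (rep_op G K u)) (vec G K u w) = vec G K u (\<lambda>g k. m k)"
proof -
  let ?I = "invariant_vectors G (rep_op G K u)"
  let ?p = "vec G K u (\<lambda>g k. m k)"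
  let ?\<eta> = "vec G K u w"
  have pI: "?p \<in> ?I" unfolding invariant_vectors_def
  proof (intro CollectI ballI)
    fix a assume a: "a \<in> carrier G"
    show "rep_op G K u a ?p = ?p" using rep_vec[OF a, of "\<lambda>g k. m k"] by simp
  qed
  have orth: "cinner \<zeta> (?\<eta> - ?p) = 0" if z: "\<zeta> \<in> ?I" for \<zeta>
  proof -
    have "cinner \<zeta> (?\<eta> - ?p) = (\<Sum>j\<in>carrier G \<times> K. (w (fst j) (snd j) - m (snd j)) * cinner \<zeta> (u j))"
      by (subst vec_diff) (simp add: vec_def cinner_sum_right cinner_scaleC_right)
    also have "\<dots> = (\<Sum>j\<in>carrier G \<times> K. (w (fst j) (snd j) - m (snd j)) * cnj (cinner (u (\<one>, snd j)) \<zeta>))"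
    proof (rule sum.cong[OF refl])
      fix j assume j: "j \<in> carrier G \<times> K"
      then obtain g k where gk: "j = (g, k)" "g \<in> carrier G" "k \<in> K" by auto
      have h1: "cinner \<zeta> (u j) = cnj (cinner (u j) \<zeta>)" by (rule cinner_cnj_commute)
      have h2: "cinner (u j) \<zeta> = cinner (u (\<one>, snd j)) \<zeta>" using gk(1) inv_vec_coef[OF z gk(2,3)] by simp
      show "(w (fst j) (snd j) - m (snd j)) * cinner \<zeta> (u j) =
         (w (fst j) (snd j) - m (snd j)) * cnj (cinner (u (\<one>, snd j)) \<zeta>)" by (simp only: h1 h2)
    qed
    also have "\<dots> = (\<Sum>k\<in>K. (\<Sum>g\<in>carrier G. w g k - m k) * cnj (cinner (u (\<one>, k)) \<zeta>))"
      by (simp add: sum_fst_snd[where f = "\<lambda>g k. (w g k - m k) * cnj (cinner (u (\<one>, k)) \<zeta>)"] sum.swap[of _ "carrier G" K] sum_distrib_right)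
    also have "\<dots> = 0"
    proof -
      have "card (carrier G) \<noteq> 0" using finG one_closed by (auto simp: card_eq_0_iff)
      then have "(\<Sum>g\<in>carrier G. w g k - m k) = 0" for k
        by (simp add: sum_subtractf m_def)
      then show ?thesis by simp
    qed
    finally show ?thesis .
  qed
  have sub: "x - y \<in> ?I" if "x \<in> ?I" "y \<in> ?I" for x y
    using that clinear_diff[OF rep_linear] unfolding invariant_vectors_def by simp
  show ?thesis
    unfolding orth_proj_def
  proof (rule the_equality)
    show "?p \<in> ?I \<and> (\<forall>s\<in>?I. cinner s (?\<eta> - ?p) = 0)" using pI orth by blast
  next
    fix p' assume p': "p' \<in> ?I \<and> (\<forall>s\<in>?I. cinner s (?\<eta> - p') = 0)"
    have d: "?p - p' \<in> ?I" using sub pI p' by blast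
    have "cinner (?p - p') (?p - p') = cinner (?p - p') ((?\<eta> - p') - (?\<eta> - ?p))" by simp
    also have "\<dots> = 0" using d p' orth by (simp add: cinner_diff_right)
    finally show "p' = ?p" by (simp add: cinner_eq_zero_iff)
  qed
qed

end


lemma kappa_bound:
  fixes A :: "('a, 'c) monoid_scheme" and w :: "'a \<Rightarrow> 'a \<Rightarrow> complex" and \<mu> :: "'a \<Rightarrow> real"
  assumes grp: "group A" and finA: "finite (carrier A)" and infd: "infinite_dimensional TYPE('h::chilbert_space)"
    and Pk: "\<forall>\<pi> :: 'a \<Rightarrow> 'h \<Rightarrow> 'h. unitary_rep A \<pi> \<longrightarrow> (\<forall>\<xi>.
        (norm (\<xi> - orth_proj (invariant_vectors A \<pi>) \<xi>))\<^sup>2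
          \<le> k / 2 * (\<Sum>g\<in>carrier A. \<mu> g * (norm (\<pi> g \<xi> - \<xi>))\<^sup>2))"
  shows "(\<Sum>j\<in>carrier A \<times> carrier A. (cmod (w (fst j) (snd j) - (\<Sum>g\<in>carrier A. w g (snd j)) / of_nat (card (carrier A))))\<^sup>2)
     \<le> k / 2 * (\<Sum>a\<in>carrier A. \<mu> a * (\<Sum>j\<in>carrier A \<times> carrier A. (cmod (w (inv\<^bsub>A\<^esub> a \<otimes>\<^bsub>A\<^esub> fst j) (snd j) - w (fst j) (snd j)))\<^sup>2))"
proof -
  have "\<exists>u :: 'a \<times> 'a \<Rightarrow> 'h. orthonormal_on (carrier A \<times> carrier A) u"
    by (rule orthonormal_exists[OF finite_cartesian_product[OF finA finA] infd])
  then obtain u :: "'a \<times> 'a \<Rightarrow> 'h" where u: "orthonormal_on (carrier A \<times> carrier A) u" ..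
  interpret R: rep_ctx A "carrier A" u
    by (intro rep_ctx.intro rep_ctx_axioms.intro grp finA u)
  define m where "m = (\<lambda>k. (\<Sum>g\<in>carrier A. w g k) / of_nat (card (carrier A)))"
  have "(norm (vec A (carrier A) u w - orth_proj (invariant_vectors A (rep_op A (carrier A) u)) (vec A (carrier A) u w)))\<^sup>2
      \<le> k / 2 * (\<Sum>g\<in>carrier A. \<mu> g * (norm (rep_op A (carrier A) u g (vec A (carrier A) u w) - vec A (carrier A) u w))\<^sup>2)"
    using Pk R.rep_unitary by blast
  also have "(\<Sum>g\<in>carrier A. \<mu> g * (norm (rep_op A (carrier A) u g (vec A (carrier A) u w) - vec A (carrier A) u w))\<^sup>2)
     = (\<Sum>a\<in>carrier A. \<mu> a * (\<Sum>j\<in>carrier A \<times> carrier A. (cmod (w (inv\<^bsub>A\<^esub> a \<otimes>\<^bsub>A\<^esub> fst j) (snd j) - w (fst j) (snd j)))\<^sup>2))"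
    by (intro sum.cong refl) (simp add: R.rep_vec R.vec_diff R.vec_norm)
  also have "(norm (vec A (carrier A) u w - orth_proj (invariant_vectors A (rep_op A (carrier A) u)) (vec A (carrier A) u w)))\<^sup>2
     = (\<Sum>j\<in>carrier A \<times> carrier A. (cmod (w (fst j) (snd j) - m (snd j)))\<^sup>2)"
    unfolding R.vec_proj by (simp add: R.vec_diff R.vec_norm m_def)
  finally show ?thesis by (simp add: m_def)
qed

lemma cmod_sq_Re: "(cmod z)\<^sup>2 = Re (z * cnj z)"
  using complex_norm_square[of z] by (metis Re_complex_of_real)

lemma cmod_diff_sq: "(cmod (a - b))\<^sup>2 = Re (a * cnj a) + Re (b * cnj b) - Re (a * cnj b) - Re (b * cnj a)"
proof -
  have "(a - b) * cnj (a - b) = a * cnj a + b * cnj b - a * cnj b - b * cnj a" by (simp add: algebra_simps)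
  then show ?thesis unfolding cmod_sq_Re by simp
qed

lemma variance_identity:
  fixes z :: "'i \<Rightarrow> complex"
  assumes "finite S" "S \<noteq> {}"
  shows "(\<Sum>g\<in>S. (cmod (z g - (\<Sum>h\<in>S. z h) / of_nat (card S)))\<^sup>2)
     = (\<Sum>g\<in>S. \<Sum>h\<in>S. (cmod (z g - z h))\<^sup>2) / (2 * real (card S))"
proof -
  define n where "n = card S"
  have n: "n > 0" using assms by (simp add: n_def card_gt_0_iff)
  define m where "m = (\<Sum>h\<in>S. z h) / of_nat n"
  define y where "y = (\<lambda>g. z g - m)"
  have sy: "(\<Sum>g\<in>S. y g) = 0"
    using n by (simp add: y_def sum_subtractf m_def n_def[symmetric])
  have "(\<Sum>g\<in>S. \<Sum>h\<in>S. (cmod (z g - z h))\<^sup>2) = (\<Sum>g\<in>S. \<Sum>h\<in>S. (cmod (y g - y h))\<^sup>2)"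
    by (simp add: y_def)
  also have "\<dots> = (\<Sum>g\<in>S. \<Sum>h\<in>S. Re (y g * cnj (y g)) + Re (y h * cnj (y h)) - Re (y g * cnj (y h)) - Re (y h * cnj (y g)))"
    by (simp only: cmod_diff_sq)
  also have "\<dots> = (\<Sum>g\<in>S. \<Sum>h\<in>S. Re (y g * cnj (y g))) + (\<Sum>g\<in>S. \<Sum>h\<in>S. Re (y h * cnj (y h)))
       - (\<Sum>g\<in>S. \<Sum>h\<in>S. Re (y g * cnj (y h))) - (\<Sum>g\<in>S. \<Sum>h\<in>S. Re (y h * cnj (y g)))"
    by (simp only: sum_subtractf sum.distrib)
  also have "\<dots> = real n * (\<Sum>g\<in>S. Re (y g * cnj (y g))) + real n * (\<Sum>h\<in>S. Re (y h * cnj (y h)))"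
  proof -
    have i1: "(\<Sum>h\<in>S. Re (y g * cnj (y h))) = 0" for g
    proof -
      have "(\<Sum>h\<in>S. Re (y g * cnj (y h))) = Re (y g * cnj (\<Sum>h\<in>S. y h))"
        by (simp add: cnj_sum sum_distrib_left)
      then show ?thesis by (simp add: sy)
    qed
    have i2: "(\<Sum>h\<in>S. Re (y h * cnj (y g))) = 0" for g
    proof -
      have "(\<Sum>h\<in>S. Re (y h * cnj (y g))) = Re ((\<Sum>h\<in>S. y h) * cnj (y g))"
        by (simp add: sum_distrib_right)
      then show ?thesis by (simp add: sy)
    qed
    show ?thesis by (simp only: i1 i2 sum.neutral_const diff_zero) (simp add: n_def sum_distrib_left)
  qed
  also have "\<dots> = 2 * real n * (\<Sum>g\<in>S. (cmod (y g))\<^sup>2)"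
    by (simp add: sy cmod_sq_Re)
  finally show ?thesis using n by (simp add: y_def m_def n_def[symmetric])
qed


lemma clinear_zero: "clinear_map f \<Longrightarrow> f 0 = (0::'a::complex_inner)"
  unfolding clinear_map_def by (metis add_cancel_right_right)

lemma clinear_minus: "clinear_map f \<Longrightarrow> f (- x) = - f (x::'a::complex_inner)"
  unfolding clinear_map_def by (metis add.right_inverse add_eq_0_iff clinear_map_def clinear_zero)

lemma clinear_diff': "clinear_map f \<Longrightarrow> f (x - y) = f x - f (y::'a::complex_inner)"
  unfolding clinear_map_def by (metis add_diff_cancel_right' diff_add_cancel)

lemma clinear_sum: "clinear_map f \<Longrightarrow> f (\<Sum>i\<in>I. g i) = (\<Sum>i\<in>I. f (g i :: 'a::complex_inner))"
  by (induction I rule: infinite_finite_induct) (auto simp: clinear_zero clinear_map_def)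

lemma bounded_op_nonneg: "bounded_op x \<Longrightarrow> \<exists>C\<ge>0. \<forall>v. norm (x v) \<le> C * norm v"
  unfolding bounded_op_def
  by (metis (no_types) max.cobounded2 max.commute mult_right_mono norm_ge_zero order_trans)

lemma bounded_op_comp: "bounded_op x \<Longrightarrow> bounded_op y \<Longrightarrow> bounded_op (x \<circ> y)"
proof -
  assume bx: "bounded_op x" and hy: "bounded_op y"
  obtain Cx where Cx: "Cx \<ge> 0" "\<And>v. norm (x v) \<le> Cx * norm v" using bounded_op_nonneg[OF bx] by blast
  obtain Cy where Cy: "\<And>v. norm (y v) \<le> Cy * norm v" using hy unfolding bounded_op_def by blast
  have "norm (x (y v)) \<le> (Cx * Cy) * norm v" for v
    using Cx(2)[of "y v"] mult_left_mono[OF Cy[of v] Cx(1)] by (simp add: mult.assoc)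
  moreover have "clinear_map (x \<circ> y)" using bx hy unfolding bounded_op_def clinear_map_def by simp
  ultimately show ?thesis unfolding bounded_op_def by auto
qed

lemma bounded_op_add: "bounded_op x \<Longrightarrow> bounded_op y \<Longrightarrow> bounded_op (\<lambda>v. x v + y v)"
proof -
  assume bx: "bounded_op x" and hy: "bounded_op y"
  obtain Cx where Cx: "\<And>v. norm (x v) \<le> Cx * norm v" using bx unfolding bounded_op_def by blast
  obtain Cy where Cy: "\<And>v. norm (y v) \<le> Cy * norm v" using hy unfolding bounded_op_def by blast
  have "norm (x v + y v) \<le> (Cx + Cy) * norm v" for v
    using norm_triangle_ineq[of "x v" "y v"] Cx[of v] Cy[of v] by (simp add: algebra_simps)
  moreover have "clinear_map (\<lambda>v. x v + y v)" using bx hy unfolding bounded_op_def clinear_map_def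
    by (simp add: scaleC_add_right)
  ultimately show ?thesis unfolding bounded_op_def by auto
qed

lemma norm_scaleC: "norm (scaleC c (x::'a::complex_inner)) = cmod c * norm x"
proof -
  have 1: "cinner (scaleC c x) (scaleC c x) = (cnj c * c) * cinner x x"
    by (simp add: cinner_scaleC_left cinner_scaleC_right)
  have 2: "cnj c * c = complex_of_real ((cmod c)\<^sup>2)" by (metis complex_norm_square mult.commute)
  have "(norm (scaleC c x))\<^sup>2 = Re (complex_of_real ((cmod c)\<^sup>2) * complex_of_real ((norm x)\<^sup>2))"
    unfolding norm_sq_cinner[of "scaleC c x"] 1 2 cinner_self_real[of x] ..
  also have "\<dots> = (cmod c * norm x)\<^sup>2" by (simp only: Re_complex_of_real of_real_mult[symmetric] power_mult_distrib)
  finally show ?thesis by (simp add: power2_eq_iff_nonneg)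
qed

lemma bounded_op_scale: "bounded_op x \<Longrightarrow> bounded_op (\<lambda>v. scaleC c (x v))"
proof -
  assume bx: "bounded_op x"
  obtain Cx where Cx: "\<And>v. norm (x v) \<le> Cx * norm v" using bx unfolding bounded_op_def by blast
  have "norm (scaleC c (x v)) \<le> (cmod c * Cx) * norm v" for v
    using mult_left_mono[OF Cx[of v], of "cmod c"] by (simp add: norm_scaleC mult.assoc)
  moreover have "clinear_map (\<lambda>v. scaleC c (x v))" using bx unfolding bounded_op_def clinear_map_def
    by (simp add: scaleC_add_right scaleC_scaleC mult.commute)
  ultimately show ?thesis unfolding bounded_op_def by auto
qed

lemma bounded_op_id: "bounded_op (id :: 'a::complex_inner \<Rightarrow> 'a)"
  unfolding bounded_op_def clinear_map_def by (auto intro: exI[of _ 1])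

lemma bounded_op_zero: "bounded_op (\<lambda>v::'a::complex_inner. 0::'a)"
  unfolding bounded_op_def clinear_map_def by (auto intro: exI[of _ 0])

lemma bounded_op_clinear: "bounded_op x \<Longrightarrow> clinear_map x"
  unfolding bounded_op_def by blast

locale vn_ctx =
  fixes M :: "('k::chilbert_space \<Rightarrow> 'k) set" and \<tau> :: "('k \<Rightarrow> 'k) \<Rightarrow> complex"
  assumes vN: "von_neumann_algebra M" and tr: "normal_faithful_tracial_state M \<tau>"
begin

lemma M_bounded: "x \<in> M \<Longrightarrow> bounded_op x"
  using vN unfolding von_neumann_algebra_def by blast

lemma M_lin: "x \<in> M \<Longrightarrow> clinear_map x"
  using M_bounded bounded_op_clinear by blast

lemma M_adj: "x \<in> M \<Longrightarrow> adj x \<in> M"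
  using vN unfolding von_neumann_algebra_def by blast

lemma M_eq: "commutant (commutant M) = M"
  using vN unfolding von_neumann_algebra_def by blast

lemma M_comm: "x \<in> M \<Longrightarrow> s \<in> commutant M \<Longrightarrow> x \<circ> s = s \<circ> x"
  using M_eq unfolding commutant_def by blast

lemma s_lin: "s \<in> commutant M \<Longrightarrow> clinear_map s"
  unfolding commutant_def using bounded_op_clinear by blast

lemma M_intro: "bounded_op x \<Longrightarrow> (\<And>s. s \<in> commutant M \<Longrightarrow> x \<circ> s = s \<circ> x) \<Longrightarrow> x \<in> M"
  using M_eq unfolding commutant_def by blast

lemma M_comp: "x \<in> M \<Longrightarrow> y \<in> M \<Longrightarrow> x \<circ> y \<in> M"
proof (rule M_intro)
  assume "x \<in> M" "y \<in> M"
  then show "bounded_op (x \<circ> y)" by (simp add: M_bounded bounded_op_comp)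
  fix s assume s: "s \<in> commutant M"
  show "x \<circ> y \<circ> s = s \<circ> (x \<circ> y)"
    using M_comm[OF \<open>x \<in> M\<close> s] M_comm[OF \<open>y \<in> M\<close> s] by (metis comp_assoc)
qed

lemma M_add: "x \<in> M \<Longrightarrow> y \<in> M \<Longrightarrow> (\<lambda>v. x v + y v) \<in> M"
proof (rule M_intro)
  assume "x \<in> M" "y \<in> M"
  then show "bounded_op (\<lambda>v. x v + y v)" by (simp add: M_bounded bounded_op_add)
  fix s assume s: "s \<in> commutant M"
  have "x (s v) + y (s v) = s (x v + y v)" for v
    using M_comm[OF \<open>x \<in> M\<close> s] M_comm[OF \<open>y \<in> M\<close> s] s_lin[OF s]
    unfolding clinear_map_def by (metis comp_apply)
  then show "(\<lambda>v. x v + y v) \<circ> s = s \<circ> (\<lambda>v. x v + y v)" by (simp add: fun_eq_iff)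
qed

lemma M_scale: "x \<in> M \<Longrightarrow> (\<lambda>v. scaleC c (x v)) \<in> M"
proof (rule M_intro)
  assume "x \<in> M"
  then show "bounded_op (\<lambda>v. scaleC c (x v))" by (simp add: M_bounded bounded_op_scale)
  fix s assume s: "s \<in> commutant M"
  have "scaleC c (x (s v)) = s (scaleC c (x v))" for v
    using M_comm[OF \<open>x \<in> M\<close> s] s_lin[OF s]
    unfolding clinear_map_def by (metis comp_apply)
  then show "(\<lambda>v. scaleC c (x v)) \<circ> s = s \<circ> (\<lambda>v. scaleC c (x v))" by (simp add: fun_eq_iff)
qed

lemma M_id: "id \<in> M"
  by (rule M_intro) (auto simp: bounded_op_id)

lemma M_zero: "(\<lambda>v. 0) \<in> M"
  by (rule M_intro) (auto simp: bounded_op_zero fun_eq_iff clinear_zero s_lin)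

lemma M_diff: "x \<in> M \<Longrightarrow> y \<in> M \<Longrightarrow> (\<lambda>v. x v - y v) \<in> M"
proof -
  assume "x \<in> M" "y \<in> M"
  then have "(\<lambda>v. x v + scaleC (-1) (y v)) \<in> M" by (simp add: M_add M_scale)
  then show ?thesis by (simp add: scaleC_minus1)
qed

lemma tau_add: "x \<in> M \<Longrightarrow> y \<in> M \<Longrightarrow> \<tau> (\<lambda>v. x v + y v) = \<tau> x + \<tau> y"
  using tr unfolding normal_faithful_tracial_state_def by blast

lemma tau_scale: "x \<in> M \<Longrightarrow> \<tau> (\<lambda>v. scaleC c (x v)) = c * \<tau> x"
  using tr unfolding normal_faithful_tracial_state_def by blast

lemma tau_pos: "x \<in> M \<Longrightarrow> Im (\<tau> (adj x \<circ> x)) = 0 \<and> Re (\<tau> (adj x \<circ> x)) \<ge> 0"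
  using tr unfolding normal_faithful_tracial_state_def by blast

lemma tau_comm: "x \<in> M \<Longrightarrow> y \<in> M \<Longrightarrow> \<tau> (x \<circ> y) = \<tau> (y \<circ> x)"
  using tr unfolding normal_faithful_tracial_state_def by blast

lemma tau_zero: "\<tau> (\<lambda>v. 0) = 0"
proof -
  have "\<tau> (\<lambda>v. scaleC 0 (id v)) = 0 * \<tau> id" by (rule tau_scale[OF M_id])
  then show ?thesis by simp
qed

lemma tau_diff: "x \<in> M \<Longrightarrow> y \<in> M \<Longrightarrow> \<tau> (\<lambda>v. x v - y v) = \<tau> x - \<tau> y"
proof -
  assume x: "x \<in> M" and y: "y \<in> M"
  have "\<tau> (\<lambda>v. x v + scaleC (-1) (y v)) = \<tau> x + (-1) * \<tau> y"
    using tau_add[OF x M_scale[OF y]] tau_scale[OF y] by simp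
  then show ?thesis by (simp add: scaleC_minus1)
qed

lemma M_tau_sum:
  assumes "finite I" "\<And>i. i \<in> I \<Longrightarrow> f i \<in> M"
  shows "(\<lambda>v. \<Sum>i\<in>I. scaleC (c i) (f i v)) \<in> M \<and> \<tau> (\<lambda>v. \<Sum>i\<in>I. scaleC (c i) (f i v)) = (\<Sum>i\<in>I. c i * \<tau> (f i))"
  using assms
proof (induction I rule: finite_induct)
  case empty then show ?case by (simp add: M_zero tau_zero)
next
  case (insert x F)
  then have IH: "(\<lambda>v. \<Sum>i\<in>F. scaleC (c i) (f i v)) \<in> M" "\<tau> (\<lambda>v. \<Sum>i\<in>F. scaleC (c i) (f i v)) = (\<Sum>i\<in>F. c i * \<tau> (f i))"
    by auto
  have fx: "(\<lambda>v. scaleC (c x) (f x v)) \<in> M" using insert M_scale by simp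
  have "(\<lambda>v. \<Sum>i\<in>insert x F. scaleC (c i) (f i v)) = (\<lambda>v. scaleC (c x) (f x v) + (\<Sum>i\<in>F. scaleC (c i) (f i v)))"
    using insert.hyps by simp
  moreover have "(\<lambda>v. scaleC (c x) (f x v) + (\<Sum>i\<in>F. scaleC (c i) (f i v))) \<in> M"
    using M_add[OF fx IH(1)] by simp
  moreover have "\<tau> (\<lambda>v. scaleC (c x) (f x v) + (\<Sum>i\<in>F. scaleC (c i) (f i v))) = c x * \<tau> (f x) + (\<Sum>i\<in>F. c i * \<tau> (f i))"
    using tau_add[OF fx IH(1)] IH(2) tau_scale insert by simp
  ultimately show ?case using insert.hyps by simp
qed

lemma M_has_adj: "x \<in> M \<Longrightarrow> has_adj x (adj x)"
  using adj_exists M_bounded by blast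

lemma adj_adj: "x \<in> M \<Longrightarrow> adj (adj x) = x"
  using adj_eqI has_adj_sym M_has_adj by blast

end


context vn_ctx
begin

lemma lc_in: "X \<in> M \<Longrightarrow> Y \<in> M \<Longrightarrow> (\<lambda>v. scaleC \<alpha> (X v) + scaleC \<beta> (Y v)) \<in> M"
  by (intro M_add M_scale)

lemma lc_adj:
  assumes "X \<in> M" "Y \<in> M"
  shows "adj (\<lambda>v. scaleC \<alpha> (X v) + scaleC \<beta> (Y v)) = (\<lambda>v. scaleC (cnj \<alpha>) (adj X v) + scaleC (cnj \<beta>) (adj Y v))"
  by (intro adj_eqI has_adj_add has_adj_scale M_has_adj assms)

lemma lc_expand:
  assumes X: "X \<in> M" and Y: "Y \<in> M"
  shows "\<tau> (adj (\<lambda>v. scaleC \<alpha> (X v) + scaleC \<beta> (Y v)) \<circ> (\<lambda>v. scaleC \<alpha> (X v) + scaleC \<beta> (Y v))) =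
    cnj \<alpha> * \<alpha> * \<tau> (adj X \<circ> X) + cnj \<alpha> * \<beta> * \<tau> (adj X \<circ> Y) + (cnj \<beta> * \<alpha> * \<tau> (adj Y \<circ> X) + cnj \<beta> * \<beta> * \<tau> (adj Y \<circ> Y))"
proof -
  have aX: "adj X \<in> M" and aY: "adj Y \<in> M" using X Y M_adj by auto
  have lX: "clinear_map (adj X)" and lY: "clinear_map (adj Y)" using aX aY M_lin by auto
  have XX: "adj X \<circ> X \<in> M" and XY: "adj X \<circ> Y \<in> M" and YX: "adj Y \<circ> X \<in> M" and YY: "adj Y \<circ> Y \<in> M"
    using aX aY X Y M_comp by auto
  define f where "f = (\<lambda>v. (scaleC (cnj \<alpha> * \<alpha>) ((adj X \<circ> X) v) + scaleC (cnj \<alpha> * \<beta>) ((adj X \<circ> Y) v))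
      + (scaleC (cnj \<beta> * \<alpha>) ((adj Y \<circ> X) v) + scaleC (cnj \<beta> * \<beta>) ((adj Y \<circ> Y) v)))"
  have eq: "adj (\<lambda>v. scaleC \<alpha> (X v) + scaleC \<beta> (Y v)) \<circ> (\<lambda>v. scaleC \<alpha> (X v) + scaleC \<beta> (Y v)) = f"
  proof
    fix v
    have "adj X (scaleC \<alpha> (X v) + scaleC \<beta> (Y v)) = scaleC \<alpha> (adj X (X v)) + scaleC \<beta> (adj X (Y v))"
      using lX unfolding clinear_map_def by simp
    moreover have "adj Y (scaleC \<alpha> (X v) + scaleC \<beta> (Y v)) = scaleC \<alpha> (adj Y (X v)) + scaleC \<beta> (adj Y (Y v))"
      using lY unfolding clinear_map_def by simp
    ultimately show "(adj (\<lambda>v. scaleC \<alpha> (X v) + scaleC \<beta> (Y v)) \<circ> (\<lambda>v. scaleC \<alpha> (X v) + scaleC \<beta> (Y v))) v = f v"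
      by (simp add: lc_adj[OF X Y] f_def scaleC_add_right scaleC_scaleC)
  qed
  have s1: "(\<lambda>v. scaleC (cnj \<alpha> * \<alpha>) ((adj X \<circ> X) v)) \<in> M" "(\<lambda>v. scaleC (cnj \<alpha> * \<beta>) ((adj X \<circ> Y) v)) \<in> M"
    "(\<lambda>v. scaleC (cnj \<beta> * \<alpha>) ((adj Y \<circ> X) v)) \<in> M" "(\<lambda>v. scaleC (cnj \<beta> * \<beta>) ((adj Y \<circ> Y) v)) \<in> M"
    using XX XY YX YY M_scale by blast+
  have "\<tau> f = \<tau> (\<lambda>v. scaleC (cnj \<alpha> * \<alpha>) ((adj X \<circ> X) v) + scaleC (cnj \<alpha> * \<beta>) ((adj X \<circ> Y) v))
     + \<tau> (\<lambda>v. scaleC (cnj \<beta> * \<alpha>) ((adj Y \<circ> X) v) + scaleC (cnj \<beta> * \<beta>) ((adj Y \<circ> Y) v))"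
    unfolding f_def by (rule tau_add[OF M_add[OF s1(1,2)] M_add[OF s1(3,4)]])
  also have "\<dots> = cnj \<alpha> * \<alpha> * \<tau> (adj X \<circ> X) + cnj \<alpha> * \<beta> * \<tau> (adj X \<circ> Y) + (cnj \<beta> * \<alpha> * \<tau> (adj Y \<circ> X) + cnj \<beta> * \<beta> * \<tau> (adj Y \<circ> Y))"
    by (simp only: tau_add[OF s1(1,2)] tau_add[OF s1(3,4)] tau_scale[OF XX] tau_scale[OF XY] tau_scale[OF YX] tau_scale[OF YY])
  finally show ?thesis by (simp add: eq)
qed

lemma tau_herm:
  assumes X: "X \<in> M" and Y: "Y \<in> M"
  shows "\<tau> (adj X \<circ> Y) = cnj (\<tau> (adj Y \<circ> X))"
proof -
  define a where "a = \<tau> (adj X \<circ> Y)"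
  define b where "b = \<tau> (adj Y \<circ> X)"
  have pX: "Im (\<tau> (adj X \<circ> X)) = 0" and pY: "Im (\<tau> (adj Y \<circ> Y)) = 0" using tau_pos X Y by auto
  have "Im (\<tau> (adj (\<lambda>v. scaleC 1 (X v) + scaleC 1 (Y v)) \<circ> (\<lambda>v. scaleC 1 (X v) + scaleC 1 (Y v)))) = 0"
    using tau_pos[OF lc_in[OF X Y]] by blast
  then have 1: "Im (a + b) = 0" using pX pY by (simp add: lc_expand[OF X Y] a_def b_def)
  have "Im (\<tau> (adj (\<lambda>v. scaleC 1 (X v) + scaleC \<i> (Y v)) \<circ> (\<lambda>v. scaleC 1 (X v) + scaleC \<i> (Y v)))) = 0"
    using tau_pos[OF lc_in[OF X Y]] by blast
  then have 2: "Re a - Re b = 0" using pX pY by (simp add: lc_expand[OF X Y] a_def b_def)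
  show ?thesis using 1 2 by (simp add: complex_eq_iff a_def[symmetric] b_def[symmetric])
qed

lemma gram_psd:
  assumes fin: "finite I" and F: "\<And>i. i \<in> I \<Longrightarrow> F i \<in> M"
  shows "psd_on I (\<lambda>x y. \<tau> (adj (F x) \<circ> F y))"
  unfolding psd_on_def
proof (intro conjI ballI allI)
  fix i j assume "i \<in> I" "j \<in> I"
  then show "\<tau> (adj (F i) \<circ> F j) = cnj (\<tau> (adj (F j) \<circ> F i))" using tau_herm F by blast
next
  fix c :: "_ \<Rightarrow> complex"
  define Y where "Y = (\<lambda>v. \<Sum>j\<in>I. scaleC (c j) (F j v))"
  have YM: "Y \<in> M" using M_tau_sum[OF fin F] by (simp add: Y_def)
  have adjY: "adj Y = (\<lambda>v. \<Sum>j\<in>I. scaleC (cnj (c j)) (adj (F j) v))"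
    unfolding Y_def by (intro adj_eqI has_adj_sum has_adj_scale M_has_adj F)
  have P: "\<And>p. p \<in> I \<times> I \<Longrightarrow> adj (F (fst p)) \<circ> F (snd p) \<in> M" using F M_adj M_comp by auto
  have eq: "adj Y \<circ> Y = (\<lambda>v. \<Sum>p\<in>I \<times> I. scaleC (cnj (c (fst p)) * c (snd p)) ((adj (F (fst p)) \<circ> F (snd p)) v))"
  proof
    fix v
    have "(adj Y \<circ> Y) v = (\<Sum>i\<in>I. scaleC (cnj (c i)) (adj (F i) (\<Sum>j\<in>I. scaleC (c j) (F j v))))"
      by (simp only: comp_apply adjY) (simp add: Y_def)
    also have "\<dots> = (\<Sum>i\<in>I. \<Sum>j\<in>I. scaleC (cnj (c i) * c j) (adj (F i) (F j v)))"
    proof (rule sum.cong[OF refl])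
      fix i assume i: "i \<in> I"
      have l: "clinear_map (adj (F i))" using M_lin M_adj F i by blast
      show "scaleC (cnj (c i)) (adj (F i) (\<Sum>j\<in>I. scaleC (c j) (F j v))) = (\<Sum>j\<in>I. scaleC (cnj (c i) * c j) (adj (F i) (F j v)))"
        using l by (simp add: clinear_sum scaleC_sum_right clinear_map_def scaleC_scaleC)
    qed
    also have "\<dots> = (\<Sum>p\<in>I \<times> I. scaleC (cnj (c (fst p)) * c (snd p)) ((adj (F (fst p)) \<circ> F (snd p)) v))"
      using sum_fst_snd[of "\<lambda>i j. scaleC (cnj (c i) * c j) (adj (F i) (F j v))" I I] by simp
    finally show "(adj Y \<circ> Y) v = (\<Sum>p\<in>I \<times> I. scaleC (cnj (c (fst p)) * c (snd p)) ((adj (F (fst p)) \<circ> F (snd p)) v))" .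
  qed
  have "\<tau> (adj Y \<circ> Y) = (\<Sum>p\<in>I \<times> I. cnj (c (fst p)) * c (snd p) * \<tau> (adj (F (fst p)) \<circ> F (snd p)))"
    unfolding eq using M_tau_sum[OF finite_cartesian_product[OF fin fin] P, where c = "\<lambda>p. cnj (c (fst p)) * c (snd p)"]
    by (rule conjunct2)
  also have "\<dots> = (\<Sum>i\<in>I. \<Sum>j\<in>I. cnj (c i) * c j * \<tau> (adj (F i) \<circ> F j))"
    using sum_fst_snd[of "\<lambda>i j. cnj (c i) * c j * \<tau> (adj (F i) \<circ> F j)" I I] by simp
  finally show "0 \<le> Re (\<Sum>i\<in>I. \<Sum>j\<in>I. cnj (c i) * c j * \<tau> (adj (F i) \<circ> F j))"
    using tau_pos[OF YM] by simp
qed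

lemma tn_conj1:
  assumes W: "W \<in> M" and C: "C \<in> M" and Wl: "adj W \<circ> W = id" and Wr: "W \<circ> adj W = id"
  shows "tnorm2_sq \<tau> (adj W \<circ> C \<circ> W) = tnorm2_sq \<tau> C"
proof -
  have aW: "adj W \<in> M" and aC: "adj C \<in> M" using W C M_adj by auto
  have "adj (adj W \<circ> C \<circ> W) = adj W \<circ> adj C \<circ> W"
  proof (rule adj_eqI)
    have h: "has_adj (adj W) W" using has_adj_sym[OF M_has_adj[OF W]] .
    show "has_adj (adj W \<circ> C \<circ> W) (adj W \<circ> adj C \<circ> W)"
      using has_adj_comp[OF has_adj_comp[OF h M_has_adj[OF C]] M_has_adj[OF W]]
      by (simp add: comp_assoc)
  qed
  moreover have Wr': "\<And>x. W (adj W x) = x" using Wr by (metis comp_apply id_apply)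
  ultimately have "adj (adj W \<circ> C \<circ> W) \<circ> (adj W \<circ> C \<circ> W) = adj W \<circ> (adj C \<circ> C \<circ> W)"
    by (simp add: fun_eq_iff)
  then have "\<tau> (adj (adj W \<circ> C \<circ> W) \<circ> (adj W \<circ> C \<circ> W)) = \<tau> ((adj C \<circ> C \<circ> W) \<circ> adj W)"
    using tau_comm[OF aW, of "adj C \<circ> C \<circ> W"] M_comp aC C W by simp
  also have "(adj C \<circ> C \<circ> W) \<circ> adj W = adj C \<circ> C" using Wr by (simp add: comp_assoc)
  finally have E: "\<tau> (adj (adj W \<circ> C \<circ> W) \<circ> (adj W \<circ> C \<circ> W)) = \<tau> (adj C \<circ> C)" .
  show ?thesis unfolding tnorm2_sq_def by (rule arg_cong[where f = Re, OF E])
qed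

lemma tn_conj2:
  assumes W: "W \<in> M" and C: "C \<in> M" and Wl: "adj W \<circ> W = id" and Wr: "W \<circ> adj W = id"
  shows "tnorm2_sq \<tau> (C \<circ> adj W) = tnorm2_sq \<tau> C"
proof -
  have aW: "adj W \<in> M" and aC: "adj C \<in> M" using W C M_adj by auto
  have "adj (C \<circ> adj W) = W \<circ> adj C"
  proof (rule adj_eqI)
    have h: "has_adj (adj W) W" using has_adj_sym[OF M_has_adj[OF W]] .
    show "has_adj (C \<circ> adj W) (W \<circ> adj C)"
      using has_adj_comp[OF M_has_adj[OF C] h] by simp
  qed
  then have "adj (C \<circ> adj W) \<circ> (C \<circ> adj W) = W \<circ> (adj C \<circ> C \<circ> adj W)"
    by (simp add: comp_assoc)
  then have "\<tau> (adj (C \<circ> adj W) \<circ> (C \<circ> adj W)) = \<tau> ((adj C \<circ> C \<circ> adj W) \<circ> W)"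
    using tau_comm[OF W, of "adj C \<circ> C \<circ> adj W"] M_comp aC C aW by simp
  also have "(adj C \<circ> C \<circ> adj W) \<circ> W = adj C \<circ> C" using Wl by (simp add: comp_assoc)
  finally have E: "\<tau> (adj (C \<circ> adj W) \<circ> (C \<circ> adj W)) = \<tau> (adj C \<circ> C)" .
  show ?thesis unfolding tnorm2_sq_def by (rule arg_cong[where f = Re, OF E])
qed

lemma tn_neg:
  assumes C: "C \<in> M"
  shows "tnorm2_sq \<tau> (\<lambda>v. - C v) = tnorm2_sq \<tau> C"
proof -
  have "adj (\<lambda>v. - C v) = (\<lambda>v. - adj C v)"
    by (rule adj_eqI) (use M_has_adj[OF C] in \<open>simp add: has_adj_def cinner_minus_left cinner_minus_right\<close>)
  moreover have "(\<lambda>v. - adj C v) \<circ> (\<lambda>v. - C v) = adj C \<circ> C"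
    using clinear_minus[OF M_lin[OF M_adj[OF C]]] by (simp add: fun_eq_iff)
  ultimately show ?thesis unfolding tnorm2_sq_def by simp
qed

lemma tn_nonneg: "C \<in> M \<Longrightarrow> tnorm2_sq \<tau> C \<ge> 0"
  unfolding tnorm2_sq_def using tau_pos by blast

lemma commutator_in: "x \<in> M \<Longrightarrow> y \<in> M \<Longrightarrow> commutator x y \<in> M"
  unfolding commutator_def using M_diff[of "x \<circ> y" "y \<circ> x"] M_comp by simp

lemma commutator_swap: "commutator y x = (\<lambda>v. - commutator x y v)"
  unfolding commutator_def by (simp add: fun_eq_iff)

end


lemma group_reindex:
  assumes grp: "group A" and h: "h \<in> carrier A"
  shows "(\<Sum>g\<in>carrier A. f g) = (\<Sum>a\<in>carrier A. f (inv\<^bsub>A\<^esub> a \<otimes>\<^bsub>A\<^esub> h))"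
proof -
  interpret A: group A by (rule grp)
  have hb: "\<And>b. b \<in> carrier A \<Longrightarrow> h \<otimes>\<^bsub>A\<^esub> (inv\<^bsub>A\<^esub> h \<otimes>\<^bsub>A\<^esub> b) = b"
    using h by (simp add: A.m_assoc[symmetric])
  show ?thesis
    by (rule sum.reindex_bij_witness[where j = "\<lambda>g. h \<otimes>\<^bsub>A\<^esub> inv\<^bsub>A\<^esub> g" and i = "\<lambda>a. inv\<^bsub>A\<^esub> a \<otimes>\<^bsub>A\<^esub> h"])
       (use h in \<open>auto simp: A.inv_mult_group A.m_assoc hb\<close>)
qed

context vn_ctx
begin

lemma U_facts:
  assumes "unitary_hom A M U" "a \<in> carrier A"
  shows "U a \<in> M" "adj (U a) \<circ> U a = id" "U a \<circ> adj (U a) = id"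
  using assms unfolding unitary_hom_def unitary_in_def by auto

lemma U_mult:
  assumes "unitary_hom A M U" "a \<in> carrier A" "b \<in> carrier A"
  shows "U (a \<otimes>\<^bsub>A\<^esub> b) = U a \<circ> U b"
  using assms unfolding unitary_hom_def by auto

lemma U_one:
  assumes grp: "group A" and UH: "unitary_hom A M U"
  shows "U \<one>\<^bsub>A\<^esub> = id"
proof -
  interpret A: group A by (rule grp)
  have "U \<one>\<^bsub>A\<^esub> = U \<one>\<^bsub>A\<^esub> \<circ> U \<one>\<^bsub>A\<^esub>" using U_mult[OF UH, of "\<one>\<^bsub>A\<^esub>" "\<one>\<^bsub>A\<^esub>"] by simp
  then have "adj (U \<one>\<^bsub>A\<^esub>) \<circ> U \<one>\<^bsub>A\<^esub> = (adj (U \<one>\<^bsub>A\<^esub>) \<circ> U \<one>\<^bsub>A\<^esub>) \<circ> U \<one>\<^bsub>A\<^esub>"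
    by (metis comp_assoc)
  then show ?thesis using U_facts(2)[OF UH A.one_closed] by simp
qed

lemma U_inv:
  assumes grp: "group A" and UH: "unitary_hom A M U" and a: "a \<in> carrier A"
  shows "U (inv\<^bsub>A\<^esub> a) = adj (U a)"
proof -
  interpret A: group A by (rule grp)
  have "U (inv\<^bsub>A\<^esub> a) \<circ> U a = id" using U_mult[OF UH, of "inv\<^bsub>A\<^esub> a" a] a U_one[OF grp UH] by simp
  then have "U (inv\<^bsub>A\<^esub> a) \<circ> (U a \<circ> adj (U a)) = adj (U a)" by (metis comp_assoc id_comp)
  then show ?thesis using U_facts(3)[OF UH a] by simp
qed

lemma one_sided:
  fixes A :: "('a, 'c) monoid_scheme" and U :: "'a \<Rightarrow> 'k \<Rightarrow> 'k" and \<mu> :: "'a \<Rightarrow> real" and k :: real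
  assumes grp: "group A" and finA: "finite (carrier A)" and UH: "unitary_hom A M U" and X: "X \<in> M"
    and infd: "infinite_dimensional TYPE('h::chilbert_space)"
    and Pk: "\<forall>\<pi> :: 'a \<Rightarrow> 'h \<Rightarrow> 'h. unitary_rep A \<pi> \<longrightarrow> (\<forall>\<xi>.
        (norm (\<xi> - orth_proj (invariant_vectors A \<pi>) \<xi>))\<^sup>2
          \<le> k / 2 * (\<Sum>g\<in>carrier A. \<mu> g * (norm (\<pi> g \<xi> - \<xi>))\<^sup>2))"
  shows "(\<Sum>a\<in>carrier A. tnorm2_sq \<tau> (commutator (U a) X)) / real (card (carrier A))
     \<le> k * (\<Sum>a\<in>carrier A. \<mu> a * tnorm2_sq \<tau> (commutator (U a) X))"
proof -
  interpret A: group A by (rule grp)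
  define n where "n = card (carrier A)"
  have n: "n > 0" using finA A.one_closed by (auto simp: n_def card_gt_0_iff)
  define F where "F = (\<lambda>g. adj (U g) \<circ> X \<circ> U g)"
  have FM: "F g \<in> M" if "g \<in> carrier A" for g
    unfolding F_def using U_facts(1)[OF UH that] X by (intro M_comp M_adj)
  define Gm where "Gm = (\<lambda>x y. \<tau> (adj (F x) \<circ> F y))"
  have "psd_on (carrier A) Gm" unfolding Gm_def by (rule gram_psd[OF finA FM])
  then obtain w where w: "\<And>i j. i \<in> carrier A \<Longrightarrow> j \<in> carrier A \<Longrightarrow> (\<Sum>k\<in>carrier A. cnj (w i k) * w j k) = Gm i j"
    using gram_embed[OF finA] by blast
  define c where "c = (\<lambda>a. tnorm2_sq \<tau> (commutator (U a) X))"
  define D where "D = (\<lambda>x y. (\<Sum>k\<in>carrier A. (cmod (w x k - w y k))\<^sup>2))"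
  have D_tn: "D x y = tnorm2_sq \<tau> (\<lambda>v. scaleC 1 (F x v) + scaleC (-1) (F y v))"
    if xy: "x \<in> carrier A" "y \<in> carrier A" for x y
  proof -
    have s: "(\<Sum>k\<in>carrier A. w a k * cnj (w b k)) = Gm b a" if "a \<in> carrier A" "b \<in> carrier A" for a b
      using w[OF that(2,1)] by (simp add: mult.commute)
    have "D x y = (\<Sum>k\<in>carrier A. Re (w x k * cnj (w x k)) + Re (w y k * cnj (w y k)) - Re (w x k * cnj (w y k)) - Re (w y k * cnj (w x k)))"
      by (simp only: D_def cmod_diff_sq)
    also have "\<dots> = Re (\<Sum>k\<in>carrier A. w x k * cnj (w x k)) + Re (\<Sum>k\<in>carrier A. w y k * cnj (w y k))
        - Re (\<Sum>k\<in>carrier A. w x k * cnj (w y k)) - Re (\<Sum>k\<in>carrier A. w y k * cnj (w x k))"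
      by (simp only: sum_subtractf sum.distrib Re_sum)
    also have "\<dots> = Re (Gm x x) + Re (Gm y y) - Re (Gm y x) - Re (Gm x y)"
      using xy by (simp only: s)
    also have "\<dots> = tnorm2_sq \<tau> (\<lambda>v. scaleC 1 (F x v) + scaleC (-1) (F y v))"
      unfolding tnorm2_sq_def lc_expand[OF FM[OF xy(1)] FM[OF xy(2)]] Gm_def by simp
    finally show ?thesis .
  qed
  have D_c: "D (inv\<^bsub>A\<^esub> a \<otimes>\<^bsub>A\<^esub> h) h = c a" if ah: "a \<in> carrier A" "h \<in> carrier A" for a h
  proof -
    have ia: "inv\<^bsub>A\<^esub> a \<otimes>\<^bsub>A\<^esub> h \<in> carrier A" using ah by simp
    have Ua: "U a \<in> M" and Uh: "U h \<in> M" using U_facts(1)[OF UH] ah by auto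
    have UaR: "\<And>v. U a (adj (U a) v) = v" using U_facts(3)[OF UH ah(1)] by (metis comp_apply id_apply)
    have Uih: "U (inv\<^bsub>A\<^esub> a \<otimes>\<^bsub>A\<^esub> h) = adj (U a) \<circ> U h"
      using U_mult[OF UH, of "inv\<^bsub>A\<^esub> a" h] U_inv[OF grp UH ah(1)] ah by simp
    have aUih: "adj (U (inv\<^bsub>A\<^esub> a \<otimes>\<^bsub>A\<^esub> h)) = adj (U h) \<circ> U a"
      unfolding Uih
      by (rule adj_eqI, rule has_adj_comp[OF has_adj_sym[OF M_has_adj[OF Ua]] M_has_adj[OF Uh]])
    have aUih2: "adj (adj (U a) \<circ> U h) = adj (U h) \<circ> U a" using aUih Uih by simp
    have lh: "clinear_map (adj (U h))" using M_lin M_adj Uh by blast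
    define C where "C = commutator (U a) X \<circ> adj (U a)"
    have CM: "commutator (U a) X \<in> M" using commutator_in Ua X by blast
    have eq: "(\<lambda>v. scaleC 1 (F (inv\<^bsub>A\<^esub> a \<otimes>\<^bsub>A\<^esub> h) v) + scaleC (-1) (F h v)) = adj (U h) \<circ> C \<circ> U h"
    proof
      fix v
      show "scaleC 1 (F (inv\<^bsub>A\<^esub> a \<otimes>\<^bsub>A\<^esub> h) v) + scaleC (-1) (F h v) = (adj (U h) \<circ> C \<circ> U h) v"
        by (simp only: F_def comp_apply Uih aUih2) (simp add: C_def commutator_def UaR clinear_diff'[OF lh] scaleC_one scaleC_minus1)
    qed
    have "c a = tnorm2_sq \<tau> C"
      unfolding c_def C_def by (rule tn_conj2[OF Ua CM U_facts(2,3)[OF UH ah(1)], symmetric])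
    also have "\<dots> = tnorm2_sq \<tau> (adj (U h) \<circ> C \<circ> U h)"
      by (rule tn_conj1[OF Uh _ U_facts(2,3)[OF UH ah(2)], symmetric])
         (unfold C_def, intro M_comp M_adj CM Ua)
    finally show ?thesis using D_tn[OF ia ah(2)] eq by simp
  qed
  define m where "m = (\<lambda>k. (\<Sum>g\<in>carrier A. w g k) / of_nat n)"
  have kb: "(\<Sum>j\<in>carrier A \<times> carrier A. (cmod (w (fst j) (snd j) - m (snd j)))\<^sup>2)
     \<le> k / 2 * (\<Sum>a\<in>carrier A. \<mu> a * (\<Sum>j\<in>carrier A \<times> carrier A. (cmod (w (inv\<^bsub>A\<^esub> a \<otimes>\<^bsub>A\<^esub> fst j) (snd j) - w (fst j) (snd j)))\<^sup>2))"
    unfolding m_def n_def by (rule kappa_bound[OF grp finA infd Pk])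
  have R: "(\<Sum>j\<in>carrier A \<times> carrier A. (cmod (w (inv\<^bsub>A\<^esub> a \<otimes>\<^bsub>A\<^esub> fst j) (snd j) - w (fst j) (snd j)))\<^sup>2) = real n * c a"
    if a: "a \<in> carrier A" for a
  proof -
    have "(\<Sum>j\<in>carrier A \<times> carrier A. (cmod (w (inv\<^bsub>A\<^esub> a \<otimes>\<^bsub>A\<^esub> fst j) (snd j) - w (fst j) (snd j)))\<^sup>2)
       = (\<Sum>g\<in>carrier A. D (inv\<^bsub>A\<^esub> a \<otimes>\<^bsub>A\<^esub> g) g)"
      unfolding D_def by (rule sum_fst_snd)
    also have "\<dots> = (\<Sum>g\<in>carrier A. c a)" using D_c a by simp
    finally show ?thesis by (simp add: n_def)
  qed
  have L: "(\<Sum>j\<in>carrier A \<times> carrier A. (cmod (w (fst j) (snd j) - m (snd j)))\<^sup>2) = (\<Sum>a\<in>carrier A. c a) / 2"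
  proof -
    have "(\<Sum>j\<in>carrier A \<times> carrier A. (cmod (w (fst j) (snd j) - m (snd j)))\<^sup>2)
        = (\<Sum>g\<in>carrier A. \<Sum>k\<in>carrier A. (cmod (w g k - m k))\<^sup>2)"
      by (rule sum_fst_snd)
    also have "\<dots> = (\<Sum>k\<in>carrier A. \<Sum>g\<in>carrier A. (cmod (w g k - m k))\<^sup>2)"
      by (rule sum.swap)
    also have "\<dots> = (\<Sum>k\<in>carrier A. (\<Sum>g\<in>carrier A. \<Sum>h\<in>carrier A. (cmod (w g k - w h k))\<^sup>2) / (2 * real n))"
    proof (intro sum.cong refl)
      fix k assume "k \<in> carrier A"
      have ne: "carrier A \<noteq> {}" using A.one_closed by blast
      show "(\<Sum>g\<in>carrier A. (cmod (w g k - m k))\<^sup>2) = (\<Sum>g\<in>carrier A. \<Sum>h\<in>carrier A. (cmod (w g k - w h k))\<^sup>2) / (2 * real n)"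
        using variance_identity[OF finA ne, of "\<lambda>g. w g k"] unfolding m_def n_def by simp
    qed
    also have "\<dots> = (\<Sum>k\<in>carrier A. \<Sum>g\<in>carrier A. \<Sum>h\<in>carrier A. (cmod (w g k - w h k))\<^sup>2) / (2 * real n)"
      by (simp only: sum_divide_distrib)
    also have "(\<Sum>k\<in>carrier A. \<Sum>g\<in>carrier A. \<Sum>h\<in>carrier A. (cmod (w g k - w h k))\<^sup>2)
       = (\<Sum>g\<in>carrier A. \<Sum>k\<in>carrier A. \<Sum>h\<in>carrier A. (cmod (w g k - w h k))\<^sup>2)"
      by (rule sum.swap)
    also have "\<dots> = (\<Sum>g\<in>carrier A. \<Sum>h\<in>carrier A. D g h)"
      unfolding D_def by (rule sum.cong[OF refl], rule sum.swap)
    also have "(\<Sum>g\<in>carrier A. \<Sum>h\<in>carrier A. D g h) = (\<Sum>h\<in>carrier A. \<Sum>g\<in>carrier A. D g h)"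
      by (rule sum.swap)
    also have "\<dots> = (\<Sum>h\<in>carrier A. \<Sum>a\<in>carrier A. D (inv\<^bsub>A\<^esub> a \<otimes>\<^bsub>A\<^esub> h) h)"
      by (intro sum.cong refl group_reindex[OF grp])
    also have "\<dots> = (\<Sum>h\<in>carrier A. \<Sum>a\<in>carrier A. c a)"
      by (intro sum.cong refl) (simp add: D_c)
    also have "\<dots> = real n * (\<Sum>a\<in>carrier A. c a)" by (simp add: n_def)
    finally show ?thesis using n by simp
  qed
  have "(\<Sum>a\<in>carrier A. c a) / 2 \<le> k / 2 * (\<Sum>a\<in>carrier A. \<mu> a * (real n * c a))"
    using kb L R by simp
  then have "(\<Sum>a\<in>carrier A. c a) \<le> real n * (k * (\<Sum>a\<in>carrier A. \<mu> a * c a))"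
    by (simp add: sum_distrib_left algebra_simps)
  then show ?thesis using n by (simp add: c_def n_def field_simps)
qed

end


lemma kappa_extract:
  fixes Q :: "real \<Rightarrow> bool" and E S :: real
  assumes nt: "Inf {ennreal k | k. k \<ge> 0 \<and> Q k} \<noteq> Orderings.top"
    and H: "\<And>k. k \<ge> 0 \<Longrightarrow> Q k \<Longrightarrow> E \<le> k * S" and S: "S \<ge> 0"
  shows "E \<le> enn2real (Inf {ennreal k | k. k \<ge> 0 \<and> Q k}) * S"
proof -
  define K where "K = {ennreal k | k. k \<ge> 0 \<and> Q k}"
  have "K \<noteq> {}" using nt unfolding K_def by (metis Inf_empty)
  then obtain k0 where k0: "k0 \<ge> 0" "Q k0" unfolding K_def by blast
  have e0: "enn2real (Inf K) \<ge> 0" by simp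
  show ?thesis
  proof (cases "S = 0")
    case True then show ?thesis using H[OF k0] by simp
  next
    case False
    then have Sp: "S > 0" using S by simp
    have "E / S \<le> enn2real (Inf K)"
    proof (cases "E / S \<le> 0")
      case True then show ?thesis using e0 by linarith
    next
      case False
      have "ennreal (E / S) \<le> Inf K"
      proof (rule Inf_greatest)
        fix x assume "x \<in> K"
        then obtain k where k: "x = ennreal k" "k \<ge> 0" "Q k" unfolding K_def by blast
        have "E / S \<le> k" using H[OF k(2,3)] Sp by (simp add: divide_le_eq)
        then show "ennreal (E / S) \<le> x" using k(1) by (simp add: ennreal_leI)
      qed
      moreover have lt: "Inf K < Orderings.top" using nt top.not_eq_extremum unfolding K_def by blast
      ultimately have "enn2real (ennreal (E / S)) \<le> enn2real (Inf K)"
        by (rule enn2real_mono)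
      then show ?thesis using False by simp
    qed
    then show ?thesis using Sp unfolding K_def by (simp add: divide_le_eq)
  qed
qed

theorem theorem2p1:
  fixes A :: "('a, 'c) monoid_scheme" and B :: "('b, 'd) monoid_scheme"
    and \<mu> :: "'a \<Rightarrow> real" and \<nu> :: "'b \<Rightarrow> real"
    and M :: "('k::chilbert_space \<Rightarrow> 'k) set" and \<tau> :: "('k \<Rightarrow> 'k) \<Rightarrow> complex"
    and U :: "'a \<Rightarrow> 'k \<Rightarrow> 'k" and V :: "'b \<Rightarrow> 'k \<Rightarrow> 'k"
  assumes "group A" "finite (carrier A)" "group B" "finite (carrier B)"
    and "prob_on (carrier A) \<mu>" "prob_on (carrier B) \<nu>"
    and "von_neumann_algebra M" "normal_faithful_tracial_state M \<tau>"
    and "unitary_hom A M U" "unitary_hom B M V"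
    and "infinite_dimensional TYPE('h::chilbert_space)"
  shows "kappa TYPE('h) A \<mu> = Orderings.top \<or> kappa TYPE('h) B \<nu> = Orderings.top \<or>
    (\<Sum>a\<in>carrier A. \<Sum>b\<in>carrier B. tnorm2_sq \<tau> (commutator (U a) (V b)))
        / (real (card (carrier A)) * real (card (carrier B)))
      \<le> enn2real (kappa TYPE('h) A \<mu>) * enn2real (kappa TYPE('h) B \<nu>) *
        (\<Sum>a\<in>carrier A. \<Sum>b\<in>carrier B. \<mu> a * \<nu> b * tnorm2_sq \<tau> (commutator (U a) (V b)))"
proof -
  note grpA = assms(1) and finA = assms(2) and grpB = assms(3) and finB = assms(4)
    and pA = assms(5) and pB = assms(6) and UH = assms(9) and VH = assms(10) and infd = assms(11)
  interpret vn_ctx M \<tau> by (intro vn_ctx.intro assms(7,8))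
  interpret GA: group A by (rule grpA)
  interpret GB: group B by (rule grpB)
  show ?thesis
  proof (cases "kappa TYPE('h) A \<mu> = Orderings.top \<or> kappa TYPE('h) B \<nu> = Orderings.top")
    case True then show ?thesis by blast
  next
    case False
    then have ntA: "kappa TYPE('h) A \<mu> \<noteq> Orderings.top" and ntB: "kappa TYPE('h) B \<nu> \<noteq> Orderings.top" by auto
    define kA where "kA = enn2real (kappa TYPE('h) A \<mu>)"
    define kB where "kB = enn2real (kappa TYPE('h) B \<nu>)"
    have kA0: "kA \<ge> 0" and kB0: "kB \<ge> 0" by (simp_all add: kA_def kB_def)
    define nA where "nA = real (card (carrier A))"
    define nB where "nB = real (card (carrier B))"
    have nA: "nA > 0" using finA GA.one_closed by (auto simp: nA_def card_gt_0_iff)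
    have nB: "nB > 0" using finB GB.one_closed by (auto simp: nB_def card_gt_0_iff)
    define c where "c = (\<lambda>a b. tnorm2_sq \<tau> (commutator (U a) (V b)))"
    have UM: "U a \<in> M" if "a \<in> carrier A" for a using U_facts(1)[OF UH that] .
    have VM: "V b \<in> M" if "b \<in> carrier B" for b using U_facts(1)[OF VH that] .
    have c0: "c a b \<ge> 0" if "a \<in> carrier A" "b \<in> carrier B" for a b
      unfolding c_def using tn_nonneg commutator_in UM VM that by blast
    have mu0: "\<mu> a \<ge> 0" if "a \<in> carrier A" for a using pA that unfolding prob_on_def by blast
    have nu0: "\<nu> b \<ge> 0" if "b \<in> carrier B" for b using pB that unfolding prob_on_def by blast
    have hA: "(\<Sum>a\<in>carrier A. c a b) / nA \<le> kA * (\<Sum>a\<in>carrier A. \<mu> a * c a b)" if b: "b \<in> carrier B" for b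
      unfolding kA_def nA_def kappa_def
    proof (rule kappa_extract[OF ntA[unfolded kappa_def]])
      fix k :: real assume "k \<ge> 0" and Pk: "\<forall>\<pi> :: 'a \<Rightarrow> 'h \<Rightarrow> 'h. unitary_rep A \<pi> \<longrightarrow> (\<forall>\<xi>.
        (norm (\<xi> - orth_proj (invariant_vectors A \<pi>) \<xi>))\<^sup>2
          \<le> k / 2 * (\<Sum>g\<in>carrier A. \<mu> g * (norm (\<pi> g \<xi> - \<xi>))\<^sup>2))"
      show "(\<Sum>a\<in>carrier A. c a b) / real (card (carrier A)) \<le> k * (\<Sum>a\<in>carrier A. \<mu> a * c a b)"
        unfolding c_def by (rule one_sided[OF grpA finA UH VM[OF b] infd Pk])
    next
      show "0 \<le> (\<Sum>a\<in>carrier A. \<mu> a * c a b)" using mu0 c0 b by (intro sum_nonneg) simp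
    qed
    have hB: "(\<Sum>b\<in>carrier B. c a b) / nB \<le> kB * (\<Sum>b\<in>carrier B. \<nu> b * c a b)" if a: "a \<in> carrier A" for a
    proof -
      have cs: "c a b = tnorm2_sq \<tau> (commutator (V b) (U a))" if "b \<in> carrier B" for b
        unfolding c_def commutator_swap[of "V b" "U a"]
        using tn_neg[OF commutator_in[OF UM[OF a] VM[OF that]]] by simp
      show ?thesis
        unfolding kB_def nB_def kappa_def
      proof (rule kappa_extract[OF ntB[unfolded kappa_def]])
        fix k :: real assume "k \<ge> 0" and Pk: "\<forall>\<pi> :: 'b \<Rightarrow> 'h \<Rightarrow> 'h. unitary_rep B \<pi> \<longrightarrow> (\<forall>\<xi>.
          (norm (\<xi> - orth_proj (invariant_vectors B \<pi>) \<xi>))\<^sup>2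
            \<le> k / 2 * (\<Sum>g\<in>carrier B. \<nu> g * (norm (\<pi> g \<xi> - \<xi>))\<^sup>2))"
        have "(\<Sum>b\<in>carrier B. tnorm2_sq \<tau> (commutator (V b) (U a))) / real (card (carrier B))
            \<le> k * (\<Sum>b\<in>carrier B. \<nu> b * tnorm2_sq \<tau> (commutator (V b) (U a)))"
          by (rule one_sided[OF grpB finB VH UM[OF a] infd Pk])
        then show "(\<Sum>b\<in>carrier B. c a b) / real (card (carrier B)) \<le> k * (\<Sum>b\<in>carrier B. \<nu> b * c a b)"
          using cs by simp
      next
        show "0 \<le> (\<Sum>b\<in>carrier B. \<nu> b * c a b)" using nu0 c0 a by (intro sum_nonneg) simp
      qed
    qed
    have "(\<Sum>a\<in>carrier A. \<Sum>b\<in>carrier B. c a b) / (nA * nB) = (\<Sum>b\<in>carrier B. (\<Sum>a\<in>carrier A. c a b) / nA) / nB"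
      by (simp add: sum.swap[of _ "carrier A"] sum_divide_distrib[symmetric] field_simps)
    also have "\<dots> \<le> (\<Sum>b\<in>carrier B. kA * (\<Sum>a\<in>carrier A. \<mu> a * c a b)) / nB"
      using nB hA by (intro divide_right_mono sum_mono) auto
    also have "\<dots> = kA * (\<Sum>a\<in>carrier A. \<mu> a * ((\<Sum>b\<in>carrier B. c a b) / nB))"
      by (simp add: sum_distrib_left sum_divide_distrib sum.swap[of _ "carrier B"] mult.assoc)
    also have "\<dots> \<le> kA * (\<Sum>a\<in>carrier A. \<mu> a * (kB * (\<Sum>b\<in>carrier B. \<nu> b * c a b)))"
      using hB mu0 kA0 by (intro mult_left_mono sum_mono) auto
    also have "\<dots> = kA * kB * (\<Sum>a\<in>carrier A. \<Sum>b\<in>carrier B. \<mu> a * \<nu> b * c a b)"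
      by (simp add: sum_distrib_left algebra_simps)
    finally show ?thesis unfolding c_def kA_def kB_def nA_def nB_def by blast
  qed
qed


end
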